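(* Consider the system $L'(t)=br_4e^{-d_4\tau_1}A_f(t-\tau_1)-(d_1+r_1)L(t)$, $N'(t)=r_1g(L(t))-(d_2+r_2)N(t)$, $A_q'(t)=r_2N(t)-(d_3+r_3)A_q(t)$, $A_f'(t)=\frac{r_3}{2}e^{-d_3\tau_2}A_q(t-\tau_2)-(d_4+r_4)A_f(t)$, where $b,r_1,\dots,r_4,d_1,\dots,d_4,\tau_1,\tau_2$ are positive constants and $g(L)=\frac{N_{cap}L}{h+L}$ with positive constants $N_{cap},h$. Let $\tau=\max\{\tau_1,\tau_2\}$, and let $\mathcal{R}_0=\frac12 bg'(0)e^{-(d_4\tau_1+d_3\tau_2)}\prod_{i=1}^4\frac{r_i}{d_i+r_i}$ (with $g'(0)=N_{cap}/h$). Then: (i) if $\mathcal{R}_0\le1$, the zero solution is globally asymptotically stable in $C([-\tau,0],\mathbb{R}^4_+)$; (ii) if $\mathcal{R}_0>1$, the system admits a unique positive equilibrium $u^*$, and $u^*$ is globally asymptotically stable in $C([-\tau,0],\mathbb{R}^4_+)\setminus\{0\}$.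
   Context: The system is regarded as a delay differential system with phase space $C([-\tau,0],\mathbb{R}^4_+)$ of initial data for $(L,N,A_q,A_f)$.
   Formalization: In (ii), convergence to $u^*$ is asserted only for nonnegative initial data in which L(0) or N(0) is nonzero, $A_q$ is not identically zero on [-$\tau_2$, 0], or $A_f$ is not identically zero on [-$\tau_1$, 0]. Apart from conventions, each condition added here is assumed in the paper as well or is needed for the statement above to hold. *)

theory Defs
  imports "HOL-Analysis.Analysis"
begin

record par =
  pb :: real  pr1 :: real  pr2 :: real  pr3 :: real  pr4 :: real
  pd1 :: real pd2 :: real  pd3 :: real  pd4 :: real
  ptau1 :: real  ptau2 :: real  pNcap :: real  ph :: real

definition admissible :: "par \<Rightarrow> bool" where
  "admissible p \<longleftrightarrow> pb p > 0 \<and> pr1 p > 0 \<and> pr2 p > 0 \<and> pr3 p > 0 \<and> pr4 p > 0 \<and>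
     pd1 p > 0 \<and> pd2 p > 0 \<and> pd3 p > 0 \<and> pd4 p > 0 \<and> ptau1 p > 0 \<and> ptau2 p > 0 \<and>
     pNcap p > 0 \<and> ph p > 0"

definition ptau :: "par \<Rightarrow> real" where
  "ptau p = max (ptau1 p) (ptau2 p)"

definition gfun :: "par \<Rightarrow> real \<Rightarrow> real" where
  "gfun p L = pNcap p * L / (ph p + L)"

definition R0 :: "par \<Rightarrow> real" where
  "R0 p = 1/2 * pb p * (pNcap p / ph p) * exp (- (pd4 p * ptau1 p + pd3 p * ptau2 p)) *
      (pr1 p / (pd1 p + pr1 p)) * (pr2 p / (pd2 p + pr2 p)) *
      (pr3 p / (pd3 p + pr3 p)) * (pr4 p / (pd4 p + pr4 p))"

text \<open>A solution on [-tau, infinity): continuous there, and satisfying the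
  equations for t \<ge> 0 (one-sided derivative at t = 0).  Its initial datum is its
  restriction to [-tau, 0].\<close>
definition is_solution ::
  "par \<Rightarrow> (real \<Rightarrow> real) \<Rightarrow> (real \<Rightarrow> real) \<Rightarrow> (real \<Rightarrow> real) \<Rightarrow> (real \<Rightarrow> real) \<Rightarrow> bool" where
  "is_solution p L N Aq Af \<longleftrightarrow>
     continuous_on {-ptau p..} L \<and> continuous_on {-ptau p..} N \<and>
     continuous_on {-ptau p..} Aq \<and> continuous_on {-ptau p..} Af \<and>
     (\<forall>t\<ge>0.
        (L has_real_derivative
           (pb p * pr4 p * exp (- pd4 p * ptau1 p) * Af (t - ptau1 p) - (pd1 p + pr1 p) * L t))
           (at t within {0..}) \<and>
        (N has_real_derivative
           (pr1 p * gfun p (L t) - (pd2 p + pr2 p) * N t)) (at t within {0..}) \<and>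
        (Aq has_real_derivative
           (pr2 p * N t - (pd3 p + pr3 p) * Aq t)) (at t within {0..}) \<and>
        (Af has_real_derivative
           (pr3 p / 2 * exp (- pd3 p * ptau2 p) * Aq (t - ptau2 p) - (pd4 p + pr4 p) * Af t))
           (at t within {0..}))"

definition nonneg_init ::
  "par \<Rightarrow> (real \<Rightarrow> real) \<Rightarrow> (real \<Rightarrow> real) \<Rightarrow> (real \<Rightarrow> real) \<Rightarrow> (real \<Rightarrow> real) \<Rightarrow> bool" where
  "nonneg_init p L N Aq Af \<longleftrightarrow>
     (\<forall>\<theta>\<in>{-ptau p..0}. L \<theta> \<ge> 0 \<and> N \<theta> \<ge> 0 \<and> Aq \<theta> \<ge> 0 \<and> Af \<theta> \<ge> 0)"

definition nonzero_init ::
  "par \<Rightarrow> (real \<Rightarrow> real) \<Rightarrow> (real \<Rightarrow> real) \<Rightarrow> (real \<Rightarrow> real) \<Rightarrow> (real \<Rightarrow> real) \<Rightarrow> bool" where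
  "nonzero_init p L N Aq Af \<longleftrightarrow>
     (\<exists>\<theta>\<in>{-ptau p..0}. L \<theta> \<noteq> 0 \<or> N \<theta> \<noteq> 0 \<or> Aq \<theta> \<noteq> 0 \<or> Af \<theta> \<noteq> 0)"

text \<open>The part of the initial datum that actually enters the evolution for t \<ge> 0
  is nonzero (otherwise the solution is identically 0 for t \<ge> 0).\<close>
definition effective_nonzero_init ::
  "par \<Rightarrow> (real \<Rightarrow> real) \<Rightarrow> (real \<Rightarrow> real) \<Rightarrow> (real \<Rightarrow> real) \<Rightarrow> (real \<Rightarrow> real) \<Rightarrow> bool" where
  "effective_nonzero_init p L N Aq Af \<longleftrightarrow>
     L 0 \<noteq> 0 \<or> N 0 \<noteq> 0 \<or> (\<exists>\<theta>\<in>{-ptau2 p..0}. Aq \<theta> \<noteq> 0) \<or> (\<exists>\<theta>\<in>{-ptau1 p..0}. Af \<theta> \<noteq> 0)"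

text \<open>Constant equilibrium (x1,x2,x3,x4) = (L,N,Aq,Af).\<close>
definition is_equilibrium :: "par \<Rightarrow> real \<times> real \<times> real \<times> real \<Rightarrow> bool" where
  "is_equilibrium p e \<longleftrightarrow> (case e of (x1, x2, x3, x4) \<Rightarrow>
     pb p * pr4 p * exp (- pd4 p * ptau1 p) * x4 - (pd1 p + pr1 p) * x1 = 0 \<and>
     pr1 p * gfun p x1 - (pd2 p + pr2 p) * x2 = 0 \<and>
     pr2 p * x2 - (pd3 p + pr3 p) * x3 = 0 \<and>
     pr3 p / 2 * exp (- pd3 p * ptau2 p) * x3 - (pd4 p + pr4 p) * x4 = 0)"

text \<open>Lyapunov stability of the equilibrium e w.r.t. initial data in
  {phi in C([-tau,0],R^4_+). P phi}, in the sup norm (componentwise max) of C.\<close>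
definition stable_in ::
  "par \<Rightarrow> real \<times> real \<times> real \<times> real \<Rightarrow>
   ((real \<Rightarrow> real) \<Rightarrow> (real \<Rightarrow> real) \<Rightarrow> (real \<Rightarrow> real) \<Rightarrow> (real \<Rightarrow> real) \<Rightarrow> bool) \<Rightarrow> bool" where
  "stable_in p e P \<longleftrightarrow> (case e of (x1, x2, x3, x4) \<Rightarrow>
     (\<forall>\<epsilon>>0. \<exists>\<delta>>0. \<forall>L N Aq Af.
        is_solution p L N Aq Af \<and> nonneg_init p L N Aq Af \<and> P L N Aq Af \<and>
        (\<forall>\<theta>\<in>{-ptau p..0}. \<bar>L \<theta> - x1\<bar> < \<delta> \<and> \<bar>N \<theta> - x2\<bar> < \<delta> \<and>
                            \<bar>Aq \<theta> - x3\<bar> < \<delta> \<and> \<bar>Af \<theta> - x4\<bar> < \<delta>)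
        \<longrightarrow> (\<forall>t\<ge>-ptau p. \<bar>L t - x1\<bar> < \<epsilon> \<and> \<bar>N t - x2\<bar> < \<epsilon> \<and>
                             \<bar>Aq t - x3\<bar> < \<epsilon> \<and> \<bar>Af t - x4\<bar> < \<epsilon>)))"

definition attractive_in ::
  "par \<Rightarrow> real \<times> real \<times> real \<times> real \<Rightarrow>
   ((real \<Rightarrow> real) \<Rightarrow> (real \<Rightarrow> real) \<Rightarrow> (real \<Rightarrow> real) \<Rightarrow> (real \<Rightarrow> real) \<Rightarrow> bool) \<Rightarrow> bool" where
  "attractive_in p e P \<longleftrightarrow> (case e of (x1, x2, x3, x4) \<Rightarrow>
     (\<forall>L N Aq Af.
        is_solution p L N Aq Af \<and> nonneg_init p L N Aq Af \<and> P L N Aq Af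
        \<longrightarrow> (L \<longlongrightarrow> x1) at_top \<and> (N \<longlongrightarrow> x2) at_top \<and>
            (Aq \<longlongrightarrow> x3) at_top \<and> (Af \<longlongrightarrow> x4) at_top))"

end

theory Submission
  imports Defs
begin


lemma expmono:
  fixes x f :: "real \<Rightarrow> real" and k a b :: real
  assumes "0 \<le> a" "a \<le> b"
    and der: "\<And>t. a \<le> t \<Longrightarrow> t \<le> b \<Longrightarrow> (x has_real_derivative (f t - k * x t)) (at t within {0..})"
    and fpos: "\<And>t. a \<le> t \<Longrightarrow> t \<le> b \<Longrightarrow> f t \<ge> 0"
  shows "exp (k*a) * x a \<le> exp (k*b) * x b"
proof -
  define y where "y t = exp (k*t) * x t" for t
  have dy: "(y has_real_derivative exp (k*t) * f t) (at t within {0..})" if "a \<le> t" "t \<le> b" for t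
  proof -
    have "((\<lambda>t. exp (k*t)) has_real_derivative exp (k*t) * k) (at t within {0..})"
      by (auto intro!: derivative_eq_intros)
    from DERIV_mult[OF this der[OF that]] show ?thesis unfolding y_def by (simp add: algebra_simps)
  qed
  have cont: "continuous_on {a..b} y"
    by (rule DERIV_continuous_on[where D="\<lambda>t. exp (k*t) * f t"]) (use \<open>0\<le>a\<close> in \<open>auto intro: DERIV_subset[OF dy]\<close>)
  have "y a \<le> y b"
  proof (rule DERIV_nonneg_imp_increasing_open[OF \<open>a\<le>b\<close> _ cont])
    fix t assume "a < t" "t < b"
    have "at t within {0..} = at t" using \<open>0\<le>a\<close> \<open>a<t\<close> by (intro at_within_interior) auto
    then show "\<exists>y'. (y has_real_derivative y') (at t) \<and> 0 \<le> y'" using dy[of t] fpos[of t] \<open>a < t\<close> \<open>t < b\<close>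
      by (intro exI[of _ "exp (k*t) * f t"]) auto
  qed
  thus ?thesis by (simp add: y_def)
qed

lemma expmono_strict:
  fixes x f :: "real \<Rightarrow> real" and k a b :: real
  assumes "0 \<le> a" "a < b"
    and der: "\<And>t. a \<le> t \<Longrightarrow> t \<le> b \<Longrightarrow> (x has_real_derivative (f t - k * x t)) (at t within {0..})"
    and fpos: "\<And>t. a < t \<Longrightarrow> t < b \<Longrightarrow> f t > 0"
  shows "exp (k*a) * x a < exp (k*b) * x b"
proof -
  define y where "y t = exp (k*t) * x t" for t
  have dy: "(y has_real_derivative exp (k*t) * f t) (at t within {0..})" if "a \<le> t" "t \<le> b" for t
  proof -
    have "((\<lambda>t. exp (k*t)) has_real_derivative exp (k*t) * k) (at t within {0..})"
      by (auto intro!: derivative_eq_intros)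
    from DERIV_mult[OF this der[OF that]] show ?thesis unfolding y_def by (simp add: algebra_simps)
  qed
  have cont: "continuous_on {a..b} y"
    by (rule DERIV_continuous_on[where D="\<lambda>t. exp (k*t) * f t"]) (use \<open>0\<le>a\<close> in \<open>auto intro: DERIV_subset[OF dy]\<close>)
  have "y a < y b"
  proof (rule DERIV_pos_imp_increasing_open[OF \<open>a<b\<close> _ cont])
    fix t assume "a < t" "t < b"
    have "at t within {0..} = at t" using \<open>0\<le>a\<close> \<open>a<t\<close> by (intro at_within_interior) auto
    then show "\<exists>y'. (y has_real_derivative y') (at t) \<and> 0 < y'" using dy[of t] fpos[of t] \<open>a < t\<close> \<open>t < b\<close>
      by (intro exI[of _ "exp (k*t) * f t"]) auto
  qed
  thus ?thesis by (simp add: y_def)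
qed

lemma cmp_lower:
  fixes x f :: "real \<Rightarrow> real" and k a b m :: real
  assumes "0 \<le> a" "a \<le> b"
    and der: "\<And>t. a \<le> t \<Longrightarrow> t \<le> b \<Longrightarrow> (x has_real_derivative (f t - k * x t)) (at t within {0..})"
    and fl: "\<And>t. a \<le> t \<Longrightarrow> t \<le> b \<Longrightarrow> k * m \<le> f t"
    and xa: "m \<le> x a"
  shows "m \<le> x b"
proof -
  have "exp (k*a) * (\<lambda>t. x t - m) a \<le> exp (k*b) * (\<lambda>t. x t - m) b"
  proof (rule expmono[where f="\<lambda>t. f t - k*m"])
    fix t assume "a \<le> t" "t \<le> b"
    from der[OF this] have "((\<lambda>t. x t - m) has_real_derivative (f t - k * x t - 0)) (at t within {0..})"
      by (intro derivative_intros) auto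
    then show "((\<lambda>t. x t - m) has_real_derivative (f t - k * m - k * (x t - m))) (at t within {0..})"
      by (simp add: algebra_simps)
    show "0 \<le> f t - k * m" using fl[OF \<open>a\<le>t\<close> \<open>t\<le>b\<close>] by simp
  qed (use assms in auto)
  moreover have "0 \<le> exp (k*a) * (x a - m)" using xa by simp
  ultimately have "0 \<le> exp (k*b) * (x b - m)" by simp
  then show ?thesis by (simp add: zero_le_mult_iff)
qed

lemma cmp_upper:
  fixes x f :: "real \<Rightarrow> real" and k a b M :: real
  assumes "0 \<le> a" "a \<le> b"
    and der: "\<And>t. a \<le> t \<Longrightarrow> t \<le> b \<Longrightarrow> (x has_real_derivative (f t - k * x t)) (at t within {0..})"
    and fl: "\<And>t. a \<le> t \<Longrightarrow> t \<le> b \<Longrightarrow> f t \<le> k * M"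
    and xa: "x a \<le> M"
  shows "x b \<le> M"
proof -
  have "- M \<le> (\<lambda>t. - x t) b"
  proof (rule cmp_lower[where f="\<lambda>t. - f t" and k=k and x="\<lambda>t. - x t" and m="-M"])
    fix t assume "a \<le> t" "t \<le> b"
    from der[OF this] have "((\<lambda>t. - x t) has_real_derivative - (f t - k * x t)) (at t within {0..})"
      by (intro derivative_intros) auto
    then show "((\<lambda>t. - x t) has_real_derivative (- f t - k * - x t)) (at t within {0..})"
      by (simp add: algebra_simps)
    show "k * - M \<le> - f t" using fl[OF \<open>a\<le>t\<close> \<open>t\<le>b\<close>] by simp
  qed (use assms in auto)
  then show ?thesis by simp
qed

lemma pos_prop:
  fixes x f :: "real \<Rightarrow> real" and k a b :: real
  assumes "0 \<le> a" "a < b"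
    and der: "\<And>t. 0 \<le> t \<Longrightarrow> (x has_real_derivative (f t - k * x t)) (at t within {0..})"
    and fnn: "\<And>t. 0 \<le> t \<Longrightarrow> f t \<ge> 0"
    and fpos: "\<And>t. a < t \<Longrightarrow> t < b \<Longrightarrow> f t > 0"
    and xa: "0 \<le> x a" and "a < t"
  shows "0 < x t"
proof -
  define c where "c = min t b"
  have "a < c" using assms by (simp add: c_def)
  have "exp (k*a) * x a < exp (k*c) * x c"
    by (rule expmono_strict[where f=f]) (use assms \<open>a<c\<close> in \<open>auto simp: c_def\<close>)
  also have "\<dots> \<le> exp (k*t) * x t"
    by (rule expmono[where f=f]) (use assms \<open>a<c\<close> in \<open>auto simp: c_def\<close>)
  finally have "0 < exp (k*t) * x t" using xa by (smt (verit) exp_gt_zero mult_nonneg_nonneg)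
  then show ?thesis by (simp add: zero_less_mult_iff)
qed

lemma pos_keep:
  fixes x f :: "real \<Rightarrow> real" and k a :: real
  assumes "0 \<le> a"
    and der: "\<And>t. 0 \<le> t \<Longrightarrow> (x has_real_derivative (f t - k * x t)) (at t within {0..})"
    and fnn: "\<And>t. 0 \<le> t \<Longrightarrow> f t \<ge> 0"
    and xa: "0 < x a" and "a \<le> t"
  shows "0 < x t"
proof -
  have "exp (k*a) * x a \<le> exp (k*t) * x t"
    by (rule expmono[where f=f]) (use assms in auto)
  moreover have "0 < exp (k*a) * x a" using xa by simp
  ultimately have "0 < exp (k*t) * x t" by linarith
  then show ?thesis by (simp add: zero_less_mult_iff)
qed


lemma ev_upper:
  fixes x f :: "real \<Rightarrow> real" and k F \<epsilon> :: real
  assumes "k > 0"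
    and der: "\<And>t. 0 \<le> t \<Longrightarrow> (x has_real_derivative (f t - k * x t)) (at t within {0..})"
    and ev: "\<And>\<epsilon>. \<epsilon> > 0 \<Longrightarrow> eventually (\<lambda>t. f t \<le> F + \<epsilon>) at_top"
    and "\<epsilon> > 0"
  shows "eventually (\<lambda>t. x t \<le> F / k + \<epsilon>) at_top"
proof -
  define \<eta> where "\<eta> = k*\<epsilon>/2"
  have "\<eta> > 0" using assms by (simp add: \<eta>_def)
  from ev[OF this] obtain T1 where T1: "\<And>t. t \<ge> T1 \<Longrightarrow> f t \<le> F + \<eta>"
    by (auto simp: eventually_at_top_linorder)
  define T where "T = max T1 0"
  define m where "m = (F + \<eta>)/k"
  have m_eq: "m = F/k + \<epsilon>/2" using \<open>k>0\<close> by (simp add: m_def \<eta>_def field_simps)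
  have km: "k * m = F + \<eta>" using \<open>k>0\<close> by (simp add: m_def)
  define C where "C = \<bar>x T - m\<bar>"
  have "C \<ge> 0" by (simp add: C_def)
  have q: "2*C/(k*\<epsilon>) \<ge> 0" using \<open>C\<ge>0\<close> \<open>k>0\<close> \<open>\<epsilon>>0\<close> by simp
  show ?thesis unfolding eventually_at_top_linorder
  proof (intro exI[of _ "T + 2*C/(k*\<epsilon>)"] allI impI)
    fix t assume t: "t \<ge> T + 2*C/(k*\<epsilon>)"
    have tT: "T \<le> t" using t q by linarith
    have e1: "exp (k*T) * (m - x T) \<le> exp (k*t) * (m - x t)"
    proof (rule expmono[where f="\<lambda>s. k*m - f s" and x="\<lambda>s. m - x s"])
      fix s assume s: "T \<le> s" "s \<le> t"
      hence "0 \<le> s" by (simp add: T_def)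
      from der[OF this] have "((\<lambda>s. m - x s) has_real_derivative (0 - (f s - k * x s))) (at s within {0..})"
        by (intro derivative_intros) auto
      then show "((\<lambda>s. m - x s) has_real_derivative (k*m - f s - k * (m - x s))) (at s within {0..})"
        by (simp add: algebra_simps)
      show "0 \<le> k*m - f s" using T1[of s] s km by (simp add: T_def)
    qed (use tT in \<open>auto simp: T_def\<close>)
    define D where "D = exp (k*(t-T))"
    have "k*t = k*T + k*(t-T)" by (simp add: algebra_simps)
    hence eD: "exp (k*t) = exp (k*T) * D" by (simp add: D_def flip: exp_add)
    have "exp (k*T) * (D * (x t - m)) = - (exp (k*t) * (m - x t))" by (simp add: eD algebra_simps)
    also have "\<dots> \<le> - (exp (k*T) * (m - x T))" using e1 by simp
    also have "\<dots> = exp (k*T) * (x T - m)" by (simp add: algebra_simps)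
    also have "\<dots> \<le> exp (k*T) * C" unfolding C_def by (intro mult_left_mono) auto
    finally have DC: "D * (x t - m) \<le> C" by simp
    have "D \<ge> 1 + k*(t-T)" unfolding D_def by (rule exp_ge_add_one_self)
    moreover have "k*(t-T) \<ge> 2*C/\<epsilon>"
    proof -
      have "t - T \<ge> 2*C/(k*\<epsilon>)" using t by simp
      hence "k*(2*C/(k*\<epsilon>)) \<le> k*(t-T)" using \<open>k>0\<close> by (intro mult_left_mono) auto
      also have "k*(2*C/(k*\<epsilon>)) = 2*C/\<epsilon>" using \<open>k>0\<close> by simp
      finally show ?thesis .
    qed
    ultimately have D1: "D \<ge> 1 + 2*C/\<epsilon>" by linarith
    have "x t - m \<le> \<epsilon>/2"
    proof (rule ccontr)
      assume "\<not> ?thesis"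
      hence c: "x t - m > \<epsilon>/2" by simp
      have a: "(1 + 2*C/\<epsilon>) * (x t - m) \<le> D * (x t - m)" using D1 c \<open>\<epsilon>>0\<close> by (intro mult_right_mono) auto
      have b: "(1 + 2*C/\<epsilon>) * (\<epsilon>/2) < (1 + 2*C/\<epsilon>) * (x t - m)"
        using c \<open>C\<ge>0\<close> \<open>\<epsilon>>0\<close> by (intro mult_strict_left_mono) (auto intro: add_pos_nonneg)
      have d: "(1 + 2*C/\<epsilon>) * (\<epsilon>/2) = \<epsilon>/2 + C" using \<open>\<epsilon>>0\<close> by (simp add: field_simps)
      show False using a b d DC \<open>\<epsilon>>0\<close> by linarith
    qed
    then show "x t \<le> F / k + \<epsilon>" using m_eq by simp
  qed
qed

lemma ev_lower:
  fixes x f :: "real \<Rightarrow> real" and k F \<epsilon> :: real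
  assumes "k > 0"
    and der: "\<And>t. 0 \<le> t \<Longrightarrow> (x has_real_derivative (f t - k * x t)) (at t within {0..})"
    and ev: "\<And>\<epsilon>. \<epsilon> > 0 \<Longrightarrow> eventually (\<lambda>t. F - \<epsilon> \<le> f t) at_top"
    and "\<epsilon> > 0"
  shows "eventually (\<lambda>t. F / k - \<epsilon> \<le> x t) at_top"
proof -
  have "eventually (\<lambda>t. (\<lambda>t. - x t) t \<le> (-F) / k + \<epsilon>) at_top"
  proof (rule ev_upper[where f="\<lambda>t. - f t"])
    fix t :: real assume "0 \<le> t"
    from der[OF this] have "((\<lambda>t. - x t) has_real_derivative - (f t - k * x t)) (at t within {0..})"
      by (intro derivative_intros) auto
    then show "((\<lambda>t. - x t) has_real_derivative (- f t - k * - x t)) (at t within {0..})"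
      by (simp add: algebra_simps)
  next
    fix e :: real assume "e > 0"
    from ev[OF this] show "eventually (\<lambda>t. - f t \<le> - F + e) at_top"
      by (rule eventually_mono) simp
  qed (use assms in auto)
  then show ?thesis by (rule eventually_mono) simp
qed

definition ub :: "(real \<Rightarrow> real) \<Rightarrow> real" where
  "ub x = Inf {M. eventually (\<lambda>t. x t \<le> M) at_top}"

definition lb :: "(real \<Rightarrow> real) \<Rightarrow> real" where
  "lb x = - ub (\<lambda>t. - x t)"

lemma ev_ex: "eventually P (at_top::real filter) \<Longrightarrow> \<exists>t. P t"
  by (metis eventually_at_top_linorder order_refl)

lemma ub_set_bdd:
  fixes x :: "real \<Rightarrow> real"
  assumes "eventually (\<lambda>t. A \<le> x t) at_top"
  shows "bdd_below {M. eventually (\<lambda>t. x t \<le> M) at_top}"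
proof (rule bdd_belowI[of _ A])
  fix M assume "M \<in> {M. eventually (\<lambda>t. x t \<le> M) at_top}"
  hence "eventually (\<lambda>t. A \<le> x t \<and> x t \<le> M) at_top" using assms by (auto intro: eventually_conj)
  from ev_ex[OF this] obtain t where "A \<le> x t \<and> x t \<le> M" by blast
  then show "A \<le> M" by simp
qed

lemma ub_ev:
  assumes "eventually (\<lambda>t. x t \<le> B) at_top" "eventually (\<lambda>t. A \<le> x t) at_top" "\<epsilon> > 0"
  shows "eventually (\<lambda>t. x t \<le> ub x + \<epsilon>) at_top"
proof -
  let ?S = "{M. eventually (\<lambda>t. x t \<le> M) at_top}"
  have ne: "?S \<noteq> {}" using assms(1) by auto
  have "Inf ?S < ub x + \<epsilon>" using assms(3) by (simp add: ub_def)
  then obtain M where "M \<in> ?S" "M < ub x + \<epsilon>"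
    using cInf_less_iff[OF ne ub_set_bdd[OF assms(2)]] by blast
  then show ?thesis by (auto elim: eventually_mono)
qed

lemma ub_le:
  assumes "eventually (\<lambda>t. A \<le> x t) at_top"
    and "\<And>\<epsilon>. \<epsilon> > 0 \<Longrightarrow> eventually (\<lambda>t. x t \<le> M + \<epsilon>) at_top"
  shows "ub x \<le> M"
proof (rule field_le_epsilon)
  fix e :: real assume "e > 0"
  then have "M + e \<in> {M. eventually (\<lambda>t. x t \<le> M) at_top}" using assms(2) by auto
  then show "ub x \<le> M + e" unfolding ub_def by (rule cInf_lower[OF _ ub_set_bdd[OF assms(1)]])
qed

lemma ub_ge:
  fixes x :: "real \<Rightarrow> real"
  assumes "eventually (\<lambda>t. x t \<le> B) at_top" "eventually (\<lambda>t. A \<le> x t) at_top"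
  shows "A \<le> ub x"
  unfolding ub_def
proof (rule cInf_greatest)
  show "{M. eventually (\<lambda>t. x t \<le> M) at_top} \<noteq> {}" using assms(1) by auto
  fix M assume "M \<in> {M. eventually (\<lambda>t. x t \<le> M) at_top}"
  hence "eventually (\<lambda>t. A \<le> x t \<and> x t \<le> M) at_top" using assms by (auto intro: eventually_conj)
  from ev_ex[OF this] obtain t where "A \<le> x t \<and> x t \<le> M" by blast
  then show "A \<le> M" by simp
qed

lemma lb_ev:
  assumes "eventually (\<lambda>t. x t \<le> B) at_top" "eventually (\<lambda>t. A \<le> x t) at_top" "\<epsilon> > 0"
  shows "eventually (\<lambda>t. lb x - \<epsilon> \<le> x t) at_top"
proof -
  have "eventually (\<lambda>t. (\<lambda>t. - x t) t \<le> ub (\<lambda>t. - x t) + \<epsilon>) at_top"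
    by (rule ub_ev[where B="-A" and A="-B"]) (use assms in \<open>auto elim: eventually_mono\<close>)
  then show ?thesis unfolding lb_def by (rule eventually_mono) simp
qed

lemma lb_ge:
  assumes "eventually (\<lambda>t. x t \<le> B) at_top"
    and "\<And>\<epsilon>. \<epsilon> > 0 \<Longrightarrow> eventually (\<lambda>t. m - \<epsilon> \<le> x t) at_top"
  shows "m \<le> lb x"
proof -
  have "ub (\<lambda>t. - x t) \<le> - m"
  proof (rule ub_le[where A="-B"])
    show "eventually (\<lambda>t. - B \<le> - x t) at_top" using assms(1) by (rule eventually_mono) simp
    fix e :: real assume "e > 0"
    from assms(2)[OF this] show "eventually (\<lambda>t. - x t \<le> - m + e) at_top" by (rule eventually_mono) simp
  qed
  then show ?thesis unfolding lb_def by simp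
qed

lemma lb_le:
  assumes "eventually (\<lambda>t. x t \<le> B) at_top" "eventually (\<lambda>t. A \<le> x t) at_top"
  shows "lb x \<le> B"
proof -
  have "- B \<le> ub (\<lambda>t. - x t)"
    by (rule ub_ge[where B="-A"]) (use assms in \<open>auto elim: eventually_mono\<close>)
  then show ?thesis unfolding lb_def by simp
qed

lemma ev_shift:
  assumes "eventually (\<lambda>t. P t) (at_top::real filter)"
  shows "eventually (\<lambda>t. P (t - c)) at_top"
proof -
  from assms obtain N where "\<And>t. t \<ge> N \<Longrightarrow> P t" by (auto simp: eventually_at_top_linorder)
  then show ?thesis unfolding eventually_at_top_linorder by (intro exI[of _ "N + c"]) auto
qed

lemma tendsto_from_bounds:
  fixes x :: "real \<Rightarrow> real"
  assumes "\<And>\<epsilon>. \<epsilon> > 0 \<Longrightarrow> eventually (\<lambda>t. x t \<le> c + \<epsilon>) at_top"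
    and "\<And>\<epsilon>. \<epsilon> > 0 \<Longrightarrow> eventually (\<lambda>t. c - \<epsilon> \<le> x t) at_top"
  shows "(x \<longlongrightarrow> c) at_top"
proof (rule tendstoI)
  fix e :: real assume "e > 0"
  then have "e/2 > 0" by simp
  from eventually_conj[OF assms(1)[OF this] assms(2)[OF this]]
  show "eventually (\<lambda>t. dist (x t) c < e) at_top"
    by (rule eventually_mono) (use \<open>e>0\<close> in \<open>auto simp: dist_real_def abs_if\<close>)
qed


locale sys =
  fixes p :: par
  assumes adm: "admissible p"
begin

definition "k1 = pd1 p + pr1 p"
definition "k2 = pd2 p + pr2 p"
definition "k3 = pd3 p + pr3 p"
definition "k4 = pd4 p + pr4 p"
definition "c1 = pb p * pr4 p * exp (- pd4 p * ptau1 p)"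
definition "c4 = pr3 p / 2 * exp (- pd3 p * ptau2 p)"
definition "Kc = c1 * c4 * pr2 p * pr1 p / (k1 * k2 * k3 * k4)"

lemma pos: "pb p > 0" "pr1 p > 0" "pr2 p > 0" "pr3 p > 0" "pr4 p > 0"
  "pd1 p > 0" "pd2 p > 0" "pd3 p > 0" "pd4 p > 0" "ptau1 p > 0" "ptau2 p > 0"
  "pNcap p > 0" "ph p > 0"
  using adm by (auto simp: admissible_def)

lemma kpos: "k1 > 0" "k2 > 0" "k3 > 0" "k4 > 0" "c1 > 0" "c4 > 0"
  using pos by (auto simp: k1_def k2_def k3_def k4_def c1_def c4_def)

lemma Kc_pos: "Kc > 0" using kpos pos by (simp add: Kc_def)

lemma tau: "ptau1 p \<le> ptau p" "ptau2 p \<le> ptau p" "ptau p > 0"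
  using pos by (auto simp: ptau_def)

lemma R0_eq: "R0 p = Kc * pNcap p / ph p"
proof -
  have e: "exp (- (pd4 p * ptau1 p + pd3 p * ptau2 p)) = exp (- pd4 p * ptau1 p) * exp (- pd3 p * ptau2 p)"
    by (simp flip: exp_add)
  show ?thesis unfolding R0_def Kc_def c1_def c4_def k1_def k2_def k3_def k4_def e
    using pos by (simp add: field_simps)
qed

abbreviation "g \<equiv> gfun p"

lemma g_nonneg: "0 \<le> x \<Longrightarrow> 0 \<le> g x"
  using pos by (simp add: gfun_def)

lemma g_zero: "g 0 = 0" by (simp add: gfun_def)

lemma g_le_Nc: "0 \<le> x \<Longrightarrow> g x \<le> pNcap p"
  using pos by (simp add: gfun_def divide_le_eq)

lemma g_lin: "0 \<le> x \<Longrightarrow> g x \<le> pNcap p / ph p * x"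
  using pos by (simp add: gfun_def field_simps mult_left_mono)

lemma g_pos: "0 < x \<Longrightarrow> 0 < g x"
  using pos by (simp add: gfun_def)

lemma g_diff: "0 \<le> x \<Longrightarrow> 0 \<le> y \<Longrightarrow> g y - g x = pNcap p * ph p * (y - x) / ((ph p + x) * (ph p + y))"
  using pos by (simp add: gfun_def field_simps)

lemma g_mono: assumes "0 \<le> x" "x \<le> y" shows "g x \<le> g y"
proof -
  have "0 \<le> g y - g x" using assms pos by (subst g_diff) auto
  then show ?thesis by simp
qed

lemma g_lip: assumes "0 \<le> x" "x \<le> y" shows "g y - g x \<le> pNcap p / ph p * (y - x)"
proof -
  have "(ph p + x) * (ph p + y) \<ge> ph p * ph p" using assms pos by (intro mult_mono) auto
  hence "pNcap p * ph p * (y - x) / ((ph p + x) * (ph p + y)) \<le> pNcap p * ph p * (y - x) / (ph p * ph p)"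
    using assms pos by (intro divide_left_mono) auto
  also have "\<dots> = pNcap p / ph p * (y - x)" using pos by (simp add: field_simps)
  finally show ?thesis using assms by (subst g_diff) auto
qed

lemma g_up: assumes "0 \<le> x" "0 \<le> y" "y \<le> x + d" "0 \<le> d" shows "g y \<le> g x + pNcap p / ph p * d"
proof (cases "y \<le> x")
  case True
  then have "g y \<le> g x" using assms by (intro g_mono) auto
  moreover have "0 \<le> pNcap p / ph p * d" using pos assms by simp
  ultimately show ?thesis by linarith
next
  case False
  then have "g y - g x \<le> pNcap p / ph p * (y - x)" using assms by (intro g_lip) auto
  also have "\<dots> \<le> pNcap p / ph p * d" using pos assms by (intro mult_left_mono) auto
  finally show ?thesis by simp
qed

lemma g_down: assumes "0 \<le> x" "0 \<le> y" "x - d \<le> y" "0 \<le> d" shows "g x - pNcap p / ph p * d \<le> g y"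
proof (cases "x \<le> y")
  case True
  then have "g x \<le> g y" using assms by (intro g_mono) auto
  moreover have "0 \<le> pNcap p / ph p * d" using pos assms by simp
  ultimately show ?thesis by linarith
next
  case False
  then have "g x - g y \<le> pNcap p / ph p * (x - y)" using assms by (intro g_lip) auto
  also have "\<dots> \<le> pNcap p / ph p * d" using pos assms by (intro mult_left_mono) auto
  finally show ?thesis by simp
qed

lemma g_conc_lo: assumes "0 \<le> x" "0 \<le> s" "s \<le> 1" shows "s * g x \<le> g (s * x)"
proof -
  have "ph p + s * x \<le> ph p + x" using assms by (simp add: mult_left_le_one_le)
  hence "pNcap p * x / (ph p + x) \<le> pNcap p * x / (ph p + s * x)"
    using assms pos by (intro divide_left_mono) (auto intro!: mult_pos_pos add_pos_nonneg)
  hence "s * (pNcap p * x / (ph p + x)) \<le> s * (pNcap p * x / (ph p + s * x))"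
    using assms by (intro mult_left_mono) auto
  then show ?thesis by (simp add: gfun_def mult.left_commute)
qed

lemma g_conc_hi: assumes "0 \<le> x" "1 \<le> s" shows "g (s * x) \<le> s * g x"
proof -
  have "ph p + x \<le> ph p + s * x" using assms by (simp add: mult_le_cancel_right1)
  hence "pNcap p * x / (ph p + s * x) \<le> pNcap p * x / (ph p + x)"
    using assms pos by (intro divide_left_mono) auto
  hence "s * (pNcap p * x / (ph p + s * x)) \<le> s * (pNcap p * x / (ph p + x))"
    using assms by (intro mult_left_mono) auto
  then show ?thesis by (simp add: gfun_def mult.left_commute)
qed

lemma fp_upper: assumes "0 < u" "u \<le> Kc * g u" shows "ph p + u \<le> Kc * pNcap p"
proof -
  have "u \<le> Kc * pNcap p * u / (ph p + u)" using assms by (simp add: gfun_def)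
  hence "u * (ph p + u) \<le> Kc * pNcap p * u" using pos assms by (simp add: le_divide_eq)
  hence "u * (ph p + u) \<le> u * (Kc * pNcap p)" by (simp add: algebra_simps)
  then show ?thesis using assms by simp
qed

lemma fp_lower: assumes "0 < u" "Kc * g u \<le> u" shows "Kc * pNcap p \<le> ph p + u"
proof -
  have "Kc * pNcap p * u / (ph p + u) \<le> u" using assms by (simp add: gfun_def)
  hence "Kc * pNcap p * u \<le> u * (ph p + u)" using pos assms by (simp add: divide_le_eq)
  hence "u * (Kc * pNcap p) \<le> u * (ph p + u)" by (simp add: algebra_simps)
  then show ?thesis using assms by simp
qed

definition "Ls = Kc * pNcap p - ph p"
definition "Ns = pr1 p * g Ls / k2"
definition "Aqs = pr2 p * Ns / k3"
definition "Afs = c4 * Aqs / k4"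

lemma R0_gt: "R0 p > 1 \<longleftrightarrow> Ls > 0"
  using pos unfolding R0_eq Ls_def by (simp add: field_simps)

lemma R0_le: "R0 p \<le> 1 \<longleftrightarrow> Kc * pNcap p \<le> ph p"
  using pos unfolding R0_eq by (simp add: field_simps)

lemma chain_eq: "c1 * (c4 * (pr2 p * (pr1 p * y / k2) / k3) / k4) / k1 = Kc * y"
  using kpos by (simp add: Kc_def field_simps)

lemma eq_props:
  assumes "R0 p > 1"
  shows "Ls > 0" "Ns > 0" "Aqs > 0" "Afs > 0"
    "k1 * Ls = c1 * Afs" "k2 * Ns = pr1 p * g Ls" "k3 * Aqs = pr2 p * Ns" "k4 * Afs = c4 * Aqs"
proof -
  show L: "Ls > 0" using assms R0_gt by simp
  show "Ns > 0" using L g_pos pos kpos by (simp add: Ns_def)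
  then show "Aqs > 0" using pos kpos by (simp add: Aqs_def)
  then show "Afs > 0" using pos kpos by (simp add: Afs_def)
  show "k2 * Ns = pr1 p * g Ls" "k3 * Aqs = pr2 p * Ns" "k4 * Afs = c4 * Aqs"
    using kpos by (auto simp: Ns_def Aqs_def Afs_def)
  have "Kc * g Ls = Ls"
  proof -
    have "ph p + Ls = Kc * pNcap p" by (simp add: Ls_def)
    then show ?thesis using L pos Kc_pos by (simp add: gfun_def field_simps)
  qed
  moreover have "c1 * Afs = k1 * (Kc * g Ls)"
    using chain_eq[of "g Ls"] kpos by (simp add: Ns_def Aqs_def Afs_def field_simps)
  ultimately show "k1 * Ls = c1 * Afs" by simp
qed

end


locale sol = sys +
  fixes L N Aq Af :: "real \<Rightarrow> real"
  assumes sol: "is_solution p L N Aq Af"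
    and nn0: "nonneg_init p L N Aq Af"
begin

lemma dL: "0 \<le> t \<Longrightarrow> (L has_real_derivative (c1 * Af (t - ptau1 p) - k1 * L t)) (at t within {0..})"
  using sol unfolding is_solution_def c1_def k1_def by auto
lemma dN: "0 \<le> t \<Longrightarrow> (N has_real_derivative (pr1 p * g (L t) - k2 * N t)) (at t within {0..})"
  using sol unfolding is_solution_def k2_def by auto
lemma dAq: "0 \<le> t \<Longrightarrow> (Aq has_real_derivative (pr2 p * N t - k3 * Aq t)) (at t within {0..})"
  using sol unfolding is_solution_def k3_def by auto
lemma dAf: "0 \<le> t \<Longrightarrow> (Af has_real_derivative (c4 * Aq (t - ptau2 p) - k4 * Af t)) (at t within {0..})"
  using sol unfolding is_solution_def c4_def k4_def by auto
lemma cont: "continuous_on {-ptau p..} L" "continuous_on {-ptau p..} N"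
  "continuous_on {-ptau p..} Aq" "continuous_on {-ptau p..} Af"
  using sol unfolding is_solution_def by auto

definition "h0 = min (ptau1 p) (ptau2 p)"
lemma h0: "h0 > 0" "h0 \<le> ptau1 p" "h0 \<le> ptau2 p" using pos by (auto simp: h0_def)

lemma steps:
  assumes "\<And>n::nat. (\<And>t. Ts - ptau p \<le> t \<Longrightarrow> t \<le> Ts + real n * h0 \<Longrightarrow> P t) \<Longrightarrow>
                     (\<And>t. Ts - ptau p \<le> t \<Longrightarrow> t \<le> Ts + real (Suc n) * h0 \<Longrightarrow> P t)"
    and "\<And>t. Ts - ptau p \<le> t \<Longrightarrow> t \<le> Ts \<Longrightarrow> P t"
    and "Ts - ptau p \<le> t"
  shows "P t"
proof -
  have claim: "\<forall>t. Ts - ptau p \<le> t \<and> t \<le> Ts + real n * h0 \<longrightarrow> P t" for n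
  proof (induction n)
    case 0 then show ?case using assms(2) by simp
  next
    case (Suc n) then show ?case using assms(1)[of n] by blast
  qed
  obtain n :: nat where "(t - Ts) / h0 \<le> real n" using real_arch_simple by blast
  then have "t - Ts \<le> real n * h0" using h0 by (simp add: divide_le_eq)
  then show ?thesis using claim[of n] assms(3) by auto
qed

lemma box_lower:
  assumes Ts: "0 \<le> Ts" and m: "0 \<le> m1" "0 \<le> m2" "0 \<le> m3" "0 \<le> m4"
    and sub: "k1*m1 \<le> c1*m4" "k2*m2 \<le> pr1 p * g m1" "k3*m3 \<le> pr2 p * m2" "k4*m4 \<le> c4*m3"
    and win: "\<And>t. Ts - ptau p \<le> t \<Longrightarrow> t \<le> Ts \<Longrightarrow> m1 \<le> L t \<and> m2 \<le> N t \<and> m3 \<le> Aq t \<and> m4 \<le> Af t"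
    and t: "Ts - ptau p \<le> t"
  shows "m1 \<le> L t \<and> m2 \<le> N t \<and> m3 \<le> Aq t \<and> m4 \<le> Af t"
proof (rule steps[where P="\<lambda>t. m1 \<le> L t \<and> m2 \<le> N t \<and> m3 \<le> Aq t \<and> m4 \<le> Af t", OF _ win t])
  fix n :: nat and t
  assume IH: "\<And>t. Ts - ptau p \<le> t \<Longrightarrow> t \<le> Ts + real n * h0 \<Longrightarrow> m1 \<le> L t \<and> m2 \<le> N t \<and> m3 \<le> Aq t \<and> m4 \<le> Af t"
  assume t1: "Ts - ptau p \<le> t" and t2: "t \<le> Ts + real (Suc n) * h0"
  define b where "b = Ts + real (Suc n) * h0"
  have nh: "0 \<le> real n * h0" using h0 by simp
  have PTs: "m1 \<le> L Ts \<and> m2 \<le> N Ts \<and> m3 \<le> Aq Ts \<and> m4 \<le> Af Ts" using IH tau nh by auto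
  have d1: "Ts - ptau p \<le> s - ptau1 p \<and> s - ptau1 p \<le> Ts + real n * h0" if "Ts \<le> s" "s \<le> b" for s
    using that tau h0 by (auto simp: b_def algebra_simps)
  have d2: "Ts - ptau p \<le> s - ptau2 p \<and> s - ptau2 p \<le> Ts + real n * h0" if "Ts \<le> s" "s \<le> b" for s
    using that tau h0 by (auto simp: b_def algebra_simps)
  have Lb: "m1 \<le> L t" if "Ts \<le> t" "t \<le> b" for t
  proof (rule cmp_lower[where f="\<lambda>s. c1 * Af (s - ptau1 p)" and k=k1 and a=Ts and x=L])
    fix s assume s: "Ts \<le> s" "s \<le> t"
    show "(L has_real_derivative (c1 * Af (s - ptau1 p) - k1 * L s)) (at s within {0..})"
      using dL s Ts by auto
    have "m4 \<le> Af (s - ptau1 p)" using IH d1[of s] s that by auto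
    then have "c1 * m4 \<le> c1 * Af (s - ptau1 p)" using kpos by (intro mult_left_mono) auto
    then show "k1 * m1 \<le> c1 * Af (s - ptau1 p)" using sub by linarith
  qed (use Ts that PTs in auto)
  have Nb: "m2 \<le> N t" if "Ts \<le> t" "t \<le> b" for t
  proof (rule cmp_lower[where f="\<lambda>s. pr1 p * g (L s)" and k=k2 and a=Ts and x=N])
    fix s assume s: "Ts \<le> s" "s \<le> t"
    show "(N has_real_derivative (pr1 p * g (L s) - k2 * N s)) (at s within {0..})"
      using dN s Ts by auto
    have "g m1 \<le> g (L s)" using Lb[of s] s that m by (intro g_mono) auto
    then have "pr1 p * g m1 \<le> pr1 p * g (L s)" using pos by (intro mult_left_mono) auto
    then show "k2 * m2 \<le> pr1 p * g (L s)" using sub by linarith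
  qed (use Ts that PTs in auto)
  have Aqb: "m3 \<le> Aq t" if "Ts \<le> t" "t \<le> b" for t
  proof (rule cmp_lower[where f="\<lambda>s. pr2 p * N s" and k=k3 and a=Ts and x=Aq])
    fix s assume s: "Ts \<le> s" "s \<le> t"
    show "(Aq has_real_derivative (pr2 p * N s - k3 * Aq s)) (at s within {0..})"
      using dAq s Ts by auto
    have "pr2 p * m2 \<le> pr2 p * N s" using Nb[of s] s that pos by (intro mult_left_mono) auto
    then show "k3 * m3 \<le> pr2 p * N s" using sub by linarith
  qed (use Ts that PTs in auto)
  have Afb: "m4 \<le> Af t" if "Ts \<le> t" "t \<le> b" for t
  proof (rule cmp_lower[where f="\<lambda>s. c4 * Aq (s - ptau2 p)" and k=k4 and a=Ts and x=Af])
    fix s assume s: "Ts \<le> s" "s \<le> t"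
    show "(Af has_real_derivative (c4 * Aq (s - ptau2 p) - k4 * Af s)) (at s within {0..})"
      using dAf s Ts by auto
    have "m3 \<le> Aq (s - ptau2 p)" using IH d2[of s] s that by auto
    then have "c4 * m3 \<le> c4 * Aq (s - ptau2 p)" using kpos by (intro mult_left_mono) auto
    then show "k4 * m4 \<le> c4 * Aq (s - ptau2 p)" using sub by linarith
  qed (use Ts that PTs in auto)
  show "m1 \<le> L t \<and> m2 \<le> N t \<and> m3 \<le> Aq t \<and> m4 \<le> Af t"
  proof (cases "t \<le> Ts")
    case True then show ?thesis using IH t1 nh by auto
  next
    case False then show ?thesis using Lb Nb Aqb Afb t2 by (auto simp: b_def)
  qed
qed

lemma nonneg: assumes "- ptau p \<le> t" shows "0 \<le> L t \<and> 0 \<le> N t \<and> 0 \<le> Aq t \<and> 0 \<le> Af t"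
  by (rule box_lower[where Ts=0]) (use nn0 assms kpos pos in \<open>auto simp: nonneg_init_def g_zero\<close>)

lemma box_upper:
  assumes Ts: "0 \<le> Ts"
    and sup: "c1*M4 \<le> k1*M1" "pr1 p * g M1 \<le> k2*M2" "pr2 p * M2 \<le> k3*M3" "c4*M3 \<le> k4*M4"
    and win: "\<And>t. Ts - ptau p \<le> t \<Longrightarrow> t \<le> Ts \<Longrightarrow> L t \<le> M1 \<and> N t \<le> M2 \<and> Aq t \<le> M3 \<and> Af t \<le> M4"
    and t: "Ts - ptau p \<le> t"
  shows "L t \<le> M1 \<and> N t \<le> M2 \<and> Aq t \<le> M3 \<and> Af t \<le> M4"
proof (rule steps[where P="\<lambda>t. L t \<le> M1 \<and> N t \<le> M2 \<and> Aq t \<le> M3 \<and> Af t \<le> M4", OF _ win t])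
  fix n :: nat and t
  assume IH: "\<And>t. Ts - ptau p \<le> t \<Longrightarrow> t \<le> Ts + real n * h0 \<Longrightarrow> L t \<le> M1 \<and> N t \<le> M2 \<and> Aq t \<le> M3 \<and> Af t \<le> M4"
  assume t1: "Ts - ptau p \<le> t" and t2: "t \<le> Ts + real (Suc n) * h0"
  define b where "b = Ts + real (Suc n) * h0"
  have nh: "0 \<le> real n * h0" using h0 by simp
  have PTs: "L Ts \<le> M1 \<and> N Ts \<le> M2 \<and> Aq Ts \<le> M3 \<and> Af Ts \<le> M4" using IH tau nh by auto
  have d1: "Ts - ptau p \<le> s - ptau1 p \<and> s - ptau1 p \<le> Ts + real n * h0" if "Ts \<le> s" "s \<le> b" for s
    using that tau h0 by (auto simp: b_def algebra_simps)
  have d2: "Ts - ptau p \<le> s - ptau2 p \<and> s - ptau2 p \<le> Ts + real n * h0" if "Ts \<le> s" "s \<le> b" for s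
    using that tau h0 by (auto simp: b_def algebra_simps)
  have nns: "0 \<le> L s \<and> 0 \<le> N s \<and> 0 \<le> Aq s \<and> 0 \<le> Af s" if "Ts - ptau p \<le> s" for s
    using nonneg[of s] that Ts by auto
  have Lb: "L t \<le> M1" if "Ts \<le> t" "t \<le> b" for t
  proof (rule cmp_upper[where f="\<lambda>s. c1 * Af (s - ptau1 p)" and k=k1 and a=Ts and x=L])
    fix s assume s: "Ts \<le> s" "s \<le> t"
    show "(L has_real_derivative (c1 * Af (s - ptau1 p) - k1 * L s)) (at s within {0..})"
      using dL s Ts by auto
    have "Af (s - ptau1 p) \<le> M4" using IH d1[of s] s that by auto
    then have "c1 * Af (s - ptau1 p) \<le> c1 * M4" using kpos by (intro mult_left_mono) auto
    then show "c1 * Af (s - ptau1 p) \<le> k1 * M1" using sup by linarith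
  qed (use Ts that PTs in auto)
  have Nb: "N t \<le> M2" if "Ts \<le> t" "t \<le> b" for t
  proof (rule cmp_upper[where f="\<lambda>s. pr1 p * g (L s)" and k=k2 and a=Ts and x=N])
    fix s assume s: "Ts \<le> s" "s \<le> t"
    show "(N has_real_derivative (pr1 p * g (L s) - k2 * N s)) (at s within {0..})"
      using dN s Ts by auto
    have "g (L s) \<le> g M1" using Lb[of s] s that nns[of s] tau by (intro g_mono) auto
    then have "pr1 p * g (L s) \<le> pr1 p * g M1" using pos by (intro mult_left_mono) auto
    then show "pr1 p * g (L s) \<le> k2 * M2" using sup by linarith
  qed (use Ts that PTs in auto)
  have Aqb: "Aq t \<le> M3" if "Ts \<le> t" "t \<le> b" for t
  proof (rule cmp_upper[where f="\<lambda>s. pr2 p * N s" and k=k3 and a=Ts and x=Aq])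
    fix s assume s: "Ts \<le> s" "s \<le> t"
    show "(Aq has_real_derivative (pr2 p * N s - k3 * Aq s)) (at s within {0..})"
      using dAq s Ts by auto
    have "pr2 p * N s \<le> pr2 p * M2" using Nb[of s] s that pos by (intro mult_left_mono) auto
    then show "pr2 p * N s \<le> k3 * M3" using sup by linarith
  qed (use Ts that PTs in auto)
  have Afb: "Af t \<le> M4" if "Ts \<le> t" "t \<le> b" for t
  proof (rule cmp_upper[where f="\<lambda>s. c4 * Aq (s - ptau2 p)" and k=k4 and a=Ts and x=Af])
    fix s assume s: "Ts \<le> s" "s \<le> t"
    show "(Af has_real_derivative (c4 * Aq (s - ptau2 p) - k4 * Af s)) (at s within {0..})"
      using dAf s Ts by auto
    have "Aq (s - ptau2 p) \<le> M3" using IH d2[of s] s that by auto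
    then have "c4 * Aq (s - ptau2 p) \<le> c4 * M3" using kpos by (intro mult_left_mono) auto
    then show "c4 * Aq (s - ptau2 p) \<le> k4 * M4" using sup by linarith
  qed (use Ts that PTs in auto)
  show "L t \<le> M1 \<and> N t \<le> M2 \<and> Aq t \<le> M3 \<and> Af t \<le> M4"
  proof (cases "t \<le> Ts")
    case True then show ?thesis using IH t1 nh by auto
  next
    case False then show ?thesis using Lb Nb Aqb Afb t2 by (auto simp: b_def)
  qed
qed

end


lemma ev_scale_up:
  fixes y :: "real \<Rightarrow> real"
  assumes "\<And>\<epsilon>. \<epsilon> > 0 \<Longrightarrow> eventually (\<lambda>t. y t \<le> U + \<epsilon>) at_top" "c > 0" "\<epsilon> > 0"
  shows "eventually (\<lambda>t. c * y (t - d) \<le> c * U + \<epsilon>) at_top"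
proof -
  have "\<epsilon>/c > 0" using assms by simp
  from ev_shift[OF assms(1)[OF this], of d]
  show ?thesis
  proof (rule eventually_mono)
    fix t assume "y (t - d) \<le> U + \<epsilon> / c"
    then have "c * y (t - d) \<le> c * (U + \<epsilon> / c)" using assms by (intro mult_left_mono) auto
    then show "c * y (t - d) \<le> c * U + \<epsilon>" using assms by (simp add: algebra_simps)
  qed
qed

lemma ev_scale_up0:
  fixes y :: "real \<Rightarrow> real"
  assumes "\<And>\<epsilon>. \<epsilon> > 0 \<Longrightarrow> eventually (\<lambda>t. y t \<le> U + \<epsilon>) at_top" "c > 0" "\<epsilon> > 0"
  shows "eventually (\<lambda>t. c * y t \<le> c * U + \<epsilon>) at_top"
  using ev_scale_up[OF assms, of 0] by simp

lemma ev_scale_lo: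
  fixes y :: "real \<Rightarrow> real"
  assumes "\<And>\<epsilon>. \<epsilon> > 0 \<Longrightarrow> eventually (\<lambda>t. U - \<epsilon> \<le> y t) at_top" "c > 0" "\<epsilon> > 0"
  shows "eventually (\<lambda>t. c * U - \<epsilon> \<le> c * y (t - d)) at_top"
proof -
  have "\<epsilon>/c > 0" using assms by simp
  from ev_shift[OF assms(1)[OF this], of d]
  show ?thesis
  proof (rule eventually_mono)
    fix t assume "U - \<epsilon> / c \<le> y (t - d)"
    then have "c * (U - \<epsilon> / c) \<le> c * y (t - d)" using assms by (intro mult_left_mono) auto
    then show "c * U - \<epsilon> \<le> c * y (t - d)" using assms by (simp add: algebra_simps)
  qed
qed

lemma ev_scale_lo0:
  fixes y :: "real \<Rightarrow> real"
  assumes "\<And>\<epsilon>. \<epsilon> > 0 \<Longrightarrow> eventually (\<lambda>t. U - \<epsilon> \<le> y t) at_top" "c > 0" "\<epsilon> > 0"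
  shows "eventually (\<lambda>t. c * U - \<epsilon> \<le> c * y t) at_top"
  using ev_scale_lo[OF assms, of 0] by simp

lemma ub_ode:
  fixes x f :: "real \<Rightarrow> real"
  assumes "k > 0"
    and der: "\<And>t. 0 \<le> t \<Longrightarrow> (x has_real_derivative (f t - k * x t)) (at t within {0..})"
    and A: "eventually (\<lambda>t. A \<le> x t) at_top"
    and ev: "\<And>\<epsilon>. \<epsilon> > 0 \<Longrightarrow> eventually (\<lambda>t. f t \<le> F + \<epsilon>) at_top"
  shows "ub x \<le> F / k"
  by (rule ub_le[OF A]) (rule ev_upper[OF assms(1) der ev])

lemma lb_ode:
  fixes x f :: "real \<Rightarrow> real"
  assumes "k > 0"
    and der: "\<And>t. 0 \<le> t \<Longrightarrow> (x has_real_derivative (f t - k * x t)) (at t within {0..})"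
    and B: "eventually (\<lambda>t. x t \<le> B) at_top"
    and ev: "\<And>\<epsilon>. \<epsilon> > 0 \<Longrightarrow> eventually (\<lambda>t. F - \<epsilon> \<le> f t) at_top"
  shows "F / k \<le> lb x"
  by (rule lb_ge[OF B]) (rule ev_lower[OF assms(1) der ev])

lemma ev_const_up: "eventually (\<lambda>t. y t \<le> B) F \<Longrightarrow> (\<epsilon>::real) > 0 \<Longrightarrow> eventually (\<lambda>t. y t \<le> B + \<epsilon>) F"
  by (erule eventually_mono) linarith

context sol
begin

lemma nonneg0: "0 \<le> t \<Longrightarrow> 0 \<le> L t \<and> 0 \<le> N t \<and> 0 \<le> Aq t \<and> 0 \<le> Af t"
  using nonneg[of t] tau(3) by auto

lemma ev_nn: "eventually (\<lambda>t. 0 \<le> L t) at_top" "eventually (\<lambda>t. 0 \<le> N t) at_top"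
  "eventually (\<lambda>t. 0 \<le> Aq t) at_top" "eventually (\<lambda>t. 0 \<le> Af t) at_top"
  by (rule eventually_mono[OF eventually_ge_at_top[of "0::real"]], drule nonneg0, simp)+

definition "BN = pr1 p * pNcap p / k2 + 1"
definition "BAq = pr2 p * BN / k3 + 1"
definition "BAf = c4 * BAq / k4 + 1"
definition "BL = c1 * BAf / k1 + 1"

lemma ev_bnd: "eventually (\<lambda>t. L t \<le> BL) at_top" "eventually (\<lambda>t. N t \<le> BN) at_top"
  "eventually (\<lambda>t. Aq t \<le> BAq) at_top" "eventually (\<lambda>t. Af t \<le> BAf) at_top"
proof -
  show bN: "eventually (\<lambda>t. N t \<le> BN) at_top" unfolding BN_def
  proof (rule ev_upper[where f="\<lambda>t. pr1 p * g (L t)" and k=k2 and x=N])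
    fix e :: real assume "e > 0"
    show "eventually (\<lambda>t. pr1 p * g (L t) \<le> pr1 p * pNcap p + e) at_top"
      using ev_nn(1)
    proof (rule eventually_mono)
      fix t assume "0 \<le> L t"
      then have "pr1 p * g (L t) \<le> pr1 p * pNcap p" using pos g_le_Nc by (intro mult_left_mono) auto
      then show "pr1 p * g (L t) \<le> pr1 p * pNcap p + e" using \<open>e>0\<close> by simp
    qed
  qed (use kpos dN in auto)
  show bAq: "eventually (\<lambda>t. Aq t \<le> BAq) at_top" unfolding BAq_def
  proof (rule ev_upper[where f="\<lambda>t. pr2 p * N t" and k=k3 and x=Aq])
    fix e :: real assume "e > 0"
    show "eventually (\<lambda>t. pr2 p * N t \<le> pr2 p * BN + e) at_top"
      by (rule ev_scale_up0[OF ev_const_up[OF bN]]) (use pos \<open>e>0\<close> in auto)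
  qed (use kpos dAq in auto)
  show bAf: "eventually (\<lambda>t. Af t \<le> BAf) at_top" unfolding BAf_def
  proof (rule ev_upper[where f="\<lambda>t. c4 * Aq (t - ptau2 p)" and k=k4 and x=Af])
    fix e :: real assume "e > 0"
    show "eventually (\<lambda>t. c4 * Aq (t - ptau2 p) \<le> c4 * BAq + e) at_top"
      by (rule ev_scale_up[OF ev_const_up[OF bAq]]) (use kpos \<open>e>0\<close> in auto)
  qed (use kpos dAf in auto)
  show "eventually (\<lambda>t. L t \<le> BL) at_top" unfolding BL_def
  proof (rule ev_upper[where f="\<lambda>t. c1 * Af (t - ptau1 p)" and k=k1 and x=L])
    fix e :: real assume "e > 0"
    show "eventually (\<lambda>t. c1 * Af (t - ptau1 p) \<le> c1 * BAf + e) at_top"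
      by (rule ev_scale_up[OF ev_const_up[OF bAf]]) (use kpos \<open>e>0\<close> in auto)
  qed (use kpos dL in auto)
qed

lemma U_ev: "e > 0 \<Longrightarrow> eventually (\<lambda>t. L t \<le> ub L + e) at_top"
  "e > 0 \<Longrightarrow> eventually (\<lambda>t. N t \<le> ub N + e) at_top"
  "e > 0 \<Longrightarrow> eventually (\<lambda>t. Aq t \<le> ub Aq + e) at_top"
  "e > 0 \<Longrightarrow> eventually (\<lambda>t. Af t \<le> ub Af + e) at_top"
  by (erule ub_ev[OF ev_bnd(1) ev_nn(1)], erule ub_ev[OF ev_bnd(2) ev_nn(2)],
      erule ub_ev[OF ev_bnd(3) ev_nn(3)], erule ub_ev[OF ev_bnd(4) ev_nn(4)])

lemma l_ev: "e > 0 \<Longrightarrow> eventually (\<lambda>t. lb L - e \<le> L t) at_top"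
  "e > 0 \<Longrightarrow> eventually (\<lambda>t. lb N - e \<le> N t) at_top"
  "e > 0 \<Longrightarrow> eventually (\<lambda>t. lb Aq - e \<le> Aq t) at_top"
  "e > 0 \<Longrightarrow> eventually (\<lambda>t. lb Af - e \<le> Af t) at_top"
  by (erule lb_ev[OF ev_bnd(1) ev_nn(1)], erule lb_ev[OF ev_bnd(2) ev_nn(2)],
      erule lb_ev[OF ev_bnd(3) ev_nn(3)], erule lb_ev[OF ev_bnd(4) ev_nn(4)])

lemma U_nn: "0 \<le> ub L" "0 \<le> ub N" "0 \<le> ub Aq" "0 \<le> ub Af"
  by (rule ub_ge[OF ev_bnd(1) ev_nn(1)], rule ub_ge[OF ev_bnd(2) ev_nn(2)],
      rule ub_ge[OF ev_bnd(3) ev_nn(3)], rule ub_ge[OF ev_bnd(4) ev_nn(4)])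

lemma l_nn: "0 \<le> lb L" "0 \<le> lb N" "0 \<le> lb Aq" "0 \<le> lb Af"
proof -
  show "0 \<le> lb L" by (rule lb_ge[OF ev_bnd(1)], rule eventually_mono[OF ev_nn(1)], simp)
  show "0 \<le> lb N" by (rule lb_ge[OF ev_bnd(2)], rule eventually_mono[OF ev_nn(2)], simp)
  show "0 \<le> lb Aq" by (rule lb_ge[OF ev_bnd(3)], rule eventually_mono[OF ev_nn(3)], simp)
  show "0 \<le> lb Af" by (rule lb_ge[OF ev_bnd(4)], rule eventually_mono[OF ev_nn(4)], simp)
qed

lemma u_chain: "ub L \<le> c1 * ub Af / k1" "ub N \<le> pr1 p * g (ub L) / k2"
  "ub Aq \<le> pr2 p * ub N / k3" "ub Af \<le> c4 * ub Aq / k4"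
proof -
  show "ub L \<le> c1 * ub Af / k1"
    apply (rule ub_ode[where f="\<lambda>t. c1 * Af (t - ptau1 p)" and x=L, OF kpos(1) dL ev_nn(1)])
     apply simp
    apply (rule ev_scale_up[OF U_ev(4) kpos(5)], auto)
    done
  show "ub Aq \<le> pr2 p * ub N / k3"
    apply (rule ub_ode[where f="\<lambda>t. pr2 p * N t" and x=Aq, OF kpos(3) dAq ev_nn(3)])
     apply simp
    apply (rule ev_scale_up0[OF U_ev(2) pos(3)], auto)
    done
  show "ub Af \<le> c4 * ub Aq / k4"
    apply (rule ub_ode[where f="\<lambda>t. c4 * Aq (t - ptau2 p)" and x=Af, OF kpos(4) dAf ev_nn(4)])
     apply simp
    apply (rule ev_scale_up[OF U_ev(3) kpos(6)], auto)
    done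
  show "ub N \<le> pr1 p * g (ub L) / k2"
  proof (rule ub_ode[where f="\<lambda>t. pr1 p * g (L t)" and x=N, OF kpos(2) dN ev_nn(2)])
    fix e :: real assume "e > 0"
    define d where "d = e / (pr1 p * (pNcap p / ph p))"
    have "d > 0" using pos \<open>e>0\<close> by (simp add: d_def)
    show "eventually (\<lambda>t. pr1 p * g (L t) \<le> pr1 p * g (ub L) + e) at_top"
      using eventually_conj[OF U_ev(1)[OF \<open>d>0\<close>] ev_nn(1)]
    proof (rule eventually_mono)
      fix t assume "L t \<le> ub L + d \<and> 0 \<le> L t"
      then have "g (L t) \<le> g (ub L) + pNcap p / ph p * d" using U_nn \<open>d>0\<close> by (intro g_up) auto
      then have "pr1 p * g (L t) \<le> pr1 p * (g (ub L) + pNcap p / ph p * d)" using pos by (intro mult_left_mono) auto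
      also have "\<dots> = pr1 p * g (ub L) + e" using pos by (simp add: d_def field_simps)
      finally show "pr1 p * g (L t) \<le> pr1 p * g (ub L) + e" .
    qed
  qed
qed

lemma l_chain: "c1 * lb Af / k1 \<le> lb L" "pr1 p * g (lb L) / k2 \<le> lb N"
  "pr2 p * lb N / k3 \<le> lb Aq" "c4 * lb Aq / k4 \<le> lb Af"
proof -
  show "c1 * lb Af / k1 \<le> lb L"
    apply (rule lb_ode[where f="\<lambda>t. c1 * Af (t - ptau1 p)" and x=L, OF kpos(1) dL ev_bnd(1)])
     apply simp
    apply (rule ev_scale_lo[OF l_ev(4) kpos(5)], auto)
    done
  show "pr2 p * lb N / k3 \<le> lb Aq"
    apply (rule lb_ode[where f="\<lambda>t. pr2 p * N t" and x=Aq, OF kpos(3) dAq ev_bnd(3)])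
     apply simp
    apply (rule ev_scale_lo0[OF l_ev(2) pos(3)], auto)
    done
  show "c4 * lb Aq / k4 \<le> lb Af"
    apply (rule lb_ode[where f="\<lambda>t. c4 * Aq (t - ptau2 p)" and x=Af, OF kpos(4) dAf ev_bnd(4)])
     apply simp
    apply (rule ev_scale_lo[OF l_ev(3) kpos(6)], auto)
    done
  show "pr1 p * g (lb L) / k2 \<le> lb N"
  proof (rule lb_ode[where f="\<lambda>t. pr1 p * g (L t)" and x=N, OF kpos(2) dN ev_bnd(2)])
    fix e :: real assume "e > 0"
    define d where "d = e / (pr1 p * (pNcap p / ph p))"
    have "d > 0" using pos \<open>e>0\<close> by (simp add: d_def)
    show "eventually (\<lambda>t. pr1 p * g (lb L) - e \<le> pr1 p * g (L t)) at_top"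
      using eventually_conj[OF l_ev(1)[OF \<open>d>0\<close>] ev_nn(1)]
    proof (rule eventually_mono)
      fix t assume "lb L - d \<le> L t \<and> 0 \<le> L t"
      then have "g (lb L) - pNcap p / ph p * d \<le> g (L t)" using l_nn \<open>d>0\<close> by (intro g_down) auto
      then have "pr1 p * (g (lb L) - pNcap p / ph p * d) \<le> pr1 p * g (L t)" using pos by (intro mult_left_mono) auto
      moreover have "pr1 p * (g (lb L) - pNcap p / ph p * d) = pr1 p * g (lb L) - e" using pos by (simp add: d_def field_simps)
      ultimately show "pr1 p * g (lb L) - e \<le> pr1 p * g (L t)" by simp
    qed
  qed
qed

lemma U_fix: "ub L \<le> Kc * g (ub L)"
proof -
  note u = u_chain
  have a: "pr2 p * ub N \<le> pr2 p * (pr1 p * g (ub L) / k2)" by (rule mult_left_mono[OF u(2)]) (use pos in auto)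
  have b: "ub Aq \<le> pr2 p * (pr1 p * g (ub L) / k2) / k3" using u(3) divide_right_mono[OF a, of k3] kpos by linarith
  have c: "c4 * ub Aq \<le> c4 * (pr2 p * (pr1 p * g (ub L) / k2) / k3)" by (rule mult_left_mono[OF b]) (use kpos in auto)
  have d: "ub Af \<le> c4 * (pr2 p * (pr1 p * g (ub L) / k2) / k3) / k4" using u(4) divide_right_mono[OF c, of k4] kpos by linarith
  have e: "c1 * ub Af \<le> c1 * (c4 * (pr2 p * (pr1 p * g (ub L) / k2) / k3) / k4)" by (rule mult_left_mono[OF d]) (use kpos in auto)
  have "ub L \<le> c1 * (c4 * (pr2 p * (pr1 p * g (ub L) / k2) / k3) / k4) / k1" using u(1) divide_right_mono[OF e, of k1] kpos by linarith
  then show ?thesis using chain_eq[of "g (ub L)"] by linarith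
qed

lemma l_fix: "Kc * g (lb L) \<le> lb L"
proof -
  note u = l_chain
  have a: "pr2 p * (pr1 p * g (lb L) / k2) \<le> pr2 p * lb N" by (rule mult_left_mono[OF u(2)]) (use pos in auto)
  have b: "pr2 p * (pr1 p * g (lb L) / k2) / k3 \<le> lb Aq" using u(3) divide_right_mono[OF a, of k3] kpos by linarith
  have c: "c4 * (pr2 p * (pr1 p * g (lb L) / k2) / k3) \<le> c4 * lb Aq" by (rule mult_left_mono[OF b]) (use kpos in auto)
  have d: "c4 * (pr2 p * (pr1 p * g (lb L) / k2) / k3) / k4 \<le> lb Af" using u(4) divide_right_mono[OF c, of k4] kpos by linarith
  have e: "c1 * (c4 * (pr2 p * (pr1 p * g (lb L) / k2) / k3) / k4) \<le> c1 * lb Af" by (rule mult_left_mono[OF d]) (use kpos in auto)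
  have "c1 * (c4 * (pr2 p * (pr1 p * g (lb L) / k2) / k3) / k4) / k1 \<le> lb L" using u(1) divide_right_mono[OF e, of k1] kpos by linarith
  then show ?thesis using chain_eq[of "g (lb L)"] by linarith
qed

end


lemma cont_pos:
  fixes f :: "real \<Rightarrow> real"
  assumes "continuous_on S f" "\<theta> \<in> S" "0 < f \<theta>"
  shows "\<exists>\<delta>>0. \<forall>s\<in>S. \<bar>s - \<theta>\<bar> < \<delta> \<longrightarrow> 0 < f s"
proof -
  from assms(1,2,3) obtain d where d: "d > 0" "\<forall>s\<in>S. dist s \<theta> < d \<longrightarrow> dist (f s) (f \<theta>) < f \<theta>"
    unfolding continuous_on_iff by blast
  show ?thesis
  proof (intro exI[of _ d] conjI ballI impI)
    fix s assume "s \<in> S" "\<bar>s - \<theta>\<bar> < d"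
    then have "dist (f s) (f \<theta>) < f \<theta>" using d by (simp add: dist_real_def)
    then show "0 < f s" by (simp add: dist_real_def abs_if split: if_splits)
  qed (use d in auto)
qed

context sol
begin

lemma attract0:
  assumes "R0 p \<le> 1"
  shows "(L \<longlongrightarrow> 0) at_top \<and> (N \<longlongrightarrow> 0) at_top \<and> (Aq \<longlongrightarrow> 0) at_top \<and> (Af \<longlongrightarrow> 0) at_top"
proof -
  have u1: "ub L = 0"
  proof (rule ccontr)
    assume "ub L \<noteq> 0"
    then have "0 < ub L" using U_nn by simp
    from fp_upper[OF this U_fix] have "ph p + ub L \<le> Kc * pNcap p" .
    then show False using assms R0_le \<open>0 < ub L\<close> by simp
  qed
  have u2: "ub N = 0" using u_chain(2) U_nn(2) by (simp add: u1 g_zero)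
  have u3: "ub Aq = 0" using u_chain(3) U_nn(3) by (simp add: u2)
  have u4: "ub Af = 0" using u_chain(4) U_nn(4) by (simp add: u3)
  have lo: "eventually (\<lambda>t. 0 - e \<le> x t) at_top" if "e > 0" "eventually (\<lambda>t. 0 \<le> x t) at_top" for e and x :: "real \<Rightarrow> real"
    using that(2) by (rule eventually_mono) (use that(1) in simp)
  show ?thesis
    using U_ev[unfolded u1 u2 u3 u4] lo ev_nn
    by (intro conjI tendsto_from_bounds) auto
qed

lemma attract_star:
  assumes "R0 p > 1" "0 < lb L"
  shows "(L \<longlongrightarrow> Ls) at_top \<and> (N \<longlongrightarrow> Ns) at_top \<and> (Aq \<longlongrightarrow> Aqs) at_top \<and> (Af \<longlongrightarrow> Afs) at_top"
proof -
  note E = eq_props[OF assms(1)]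
  have u1: "ub L \<le> Ls"
  proof (cases "ub L = 0")
    case True then show ?thesis using E by simp
  next
    case False
    then have "0 < ub L" using U_nn by simp
    from fp_upper[OF this U_fix] show ?thesis by (simp add: Ls_def)
  qed
  have "pr1 p * g (ub L) / k2 \<le> pr1 p * g Ls / k2"
    using u1 U_nn pos kpos by (intro divide_right_mono mult_left_mono g_mono) auto
  then have u2: "ub N \<le> Ns" using u_chain(2) by (simp add: Ns_def)
  have "pr2 p * ub N / k3 \<le> pr2 p * Ns / k3"
    using u2 pos kpos by (intro divide_right_mono mult_left_mono) auto
  then have u3: "ub Aq \<le> Aqs" using u_chain(3) by (simp add: Aqs_def)
  have "c4 * ub Aq / k4 \<le> c4 * Aqs / k4"
    using u3 pos kpos by (intro divide_right_mono mult_left_mono) auto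
  then have u4: "ub Af \<le> Afs" using u_chain(4) by (simp add: Afs_def)
  have l1: "Ls \<le> lb L" using fp_lower[OF assms(2) l_fix] by (simp add: Ls_def)
  have "pr1 p * g Ls / k2 \<le> pr1 p * g (lb L) / k2"
    using l1 E pos kpos by (intro divide_right_mono mult_left_mono g_mono) auto
  then have l2: "Ns \<le> lb N" using l_chain(2) by (simp add: Ns_def)
  have "pr2 p * Ns / k3 \<le> pr2 p * lb N / k3"
    using l2 pos kpos by (intro divide_right_mono mult_left_mono) auto
  then have l3: "Aqs \<le> lb Aq" using l_chain(3) by (simp add: Aqs_def)
  have "c4 * Aqs / k4 \<le> c4 * lb Aq / k4"
    using l3 pos kpos by (intro divide_right_mono mult_left_mono) auto
  then have l4: "Afs \<le> lb Af" using l_chain(4) by (simp add: Afs_def)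
  have up: "eventually (\<lambda>t. x t \<le> c + e) at_top"
    if "e > 0" "\<And>e. e > 0 \<Longrightarrow> eventually (\<lambda>t. x t \<le> u + e) at_top" "u \<le> c" for e c u and x :: "real \<Rightarrow> real"
    using that(2)[OF that(1)] by (rule eventually_mono) (use that(3) in simp)
  have dn: "eventually (\<lambda>t. c - e \<le> x t) at_top"
    if "e > 0" "\<And>e. e > 0 \<Longrightarrow> eventually (\<lambda>t. u - e \<le> x t) at_top" "c \<le> u" for e c u and x :: "real \<Rightarrow> real"
    using that(2)[OF that(1)] by (rule eventually_mono) (use that(3) in simp)
  show ?thesis
  proof (intro conjI tendsto_from_bounds)
    show "eventually (\<lambda>t. L t \<le> Ls + e) at_top" if "e > 0" for e by (rule up[OF that U_ev(1) u1])
    show "eventually (\<lambda>t. N t \<le> Ns + e) at_top" if "e > 0" for e by (rule up[OF that U_ev(2) u2])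
    show "eventually (\<lambda>t. Aq t \<le> Aqs + e) at_top" if "e > 0" for e by (rule up[OF that U_ev(3) u3])
    show "eventually (\<lambda>t. Af t \<le> Afs + e) at_top" if "e > 0" for e by (rule up[OF that U_ev(4) u4])
    show "eventually (\<lambda>t. Ls - e \<le> L t) at_top" if "e > 0" for e by (rule dn[OF that l_ev(1) l1])
    show "eventually (\<lambda>t. Ns - e \<le> N t) at_top" if "e > 0" for e by (rule dn[OF that l_ev(2) l2])
    show "eventually (\<lambda>t. Aqs - e \<le> Aq t) at_top" if "e > 0" for e by (rule dn[OF that l_ev(3) l3])
    show "eventually (\<lambda>t. Afs - e \<le> Af t) at_top" if "e > 0" for e by (rule dn[OF that l_ev(4) l4])
  qed
qed

end


context sol
begin

lemma pN: assumes "0 \<le> a" "\<And>s. a < s \<Longrightarrow> 0 < L s" "a < t" shows "0 < N t"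
proof (rule pos_prop[where f="\<lambda>s. pr1 p * g (L s)" and k=k2 and b="t+1" and x=N and a=a])
  fix s :: real assume "0 \<le> s"
  then show "(N has_real_derivative (pr1 p * g (L s) - k2 * N s)) (at s within {0..})" by (rule dN)
  show "0 \<le> pr1 p * g (L s)" using nonneg0[OF \<open>0\<le>s\<close>] pos g_nonneg by simp
next
  fix s assume "a < s" "s < t + 1"
  then show "0 < pr1 p * g (L s)" using assms pos g_pos by simp
qed (use assms nonneg0 in auto)

lemma pAq: assumes "0 \<le> a" "\<And>s. a < s \<Longrightarrow> 0 < N s" "a < t" shows "0 < Aq t"
proof (rule pos_prop[where f="\<lambda>s. pr2 p * N s" and k=k3 and b="t+1" and x=Aq and a=a])
  fix s :: real assume "0 \<le> s"
  then show "(Aq has_real_derivative (pr2 p * N s - k3 * Aq s)) (at s within {0..})" by (rule dAq)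
  show "0 \<le> pr2 p * N s" using nonneg0[OF \<open>0\<le>s\<close>] pos by simp
next
  fix s assume "a < s" "s < t + 1"
  then show "0 < pr2 p * N s" using assms pos by simp
qed (use assms nonneg0 in auto)

lemma pAf: assumes "0 \<le> a + ptau2 p" "a < b" "\<And>s. a < s \<Longrightarrow> s < b \<Longrightarrow> 0 < Aq s" "a + ptau2 p < t"
  shows "0 < Af t"
proof (rule pos_prop[where f="\<lambda>s. c4 * Aq (s - ptau2 p)" and k=k4 and b="b + ptau2 p" and x=Af and a="a + ptau2 p"])
  fix s :: real assume "0 \<le> s"
  then show "(Af has_real_derivative (c4 * Aq (s - ptau2 p) - k4 * Af s)) (at s within {0..})" by (rule dAf)
  have "- ptau p \<le> s - ptau2 p" using \<open>0\<le>s\<close> tau by simp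
  then show "0 \<le> c4 * Aq (s - ptau2 p)" using nonneg kpos by simp
next
  fix s assume "a + ptau2 p < s" "s < b + ptau2 p"
  then show "0 < c4 * Aq (s - ptau2 p)" using assms kpos by simp
qed (use assms nonneg0 in auto)

lemma pL: assumes "0 \<le> a + ptau1 p" "a < b" "\<And>s. a < s \<Longrightarrow> s < b \<Longrightarrow> 0 < Af s" "a + ptau1 p < t"
  shows "0 < L t"
proof (rule pos_prop[where f="\<lambda>s. c1 * Af (s - ptau1 p)" and k=k1 and b="b + ptau1 p" and x=L and a="a + ptau1 p"])
  fix s :: real assume "0 \<le> s"
  then show "(L has_real_derivative (c1 * Af (s - ptau1 p) - k1 * L s)) (at s within {0..})" by (rule dL)
  have "- ptau p \<le> s - ptau1 p" using \<open>0\<le>s\<close> tau by simp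
  then show "0 \<le> c1 * Af (s - ptau1 p)" using nonneg kpos by simp
next
  fix s assume "a + ptau1 p < s" "s < b + ptau1 p"
  then show "0 < c1 * Af (s - ptau1 p)" using assms kpos by simp
qed (use assms nonneg0 in auto)

lemma pos_after:
  assumes "effective_nonzero_init p L N Aq Af"
  shows "\<forall>t \<ge> ptau1 p + ptau2 p + 1. 0 < L t \<and> 0 < N t \<and> 0 < Aq t \<and> 0 < Af t"
proof (intro allI impI)
  fix t assume t: "ptau1 p + ptau2 p + 1 \<le> t"
  have t1: "ptau1 p > 0" "ptau2 p > 0" using pos by auto
  have inw: "\<theta> \<in> {-ptau p..0}" if "- ptau2 p \<le> \<theta>" "\<theta> \<le> 0" for \<theta> using that tau by auto
  have inw': "\<theta> \<in> {-ptau p..0}" if "- ptau1 p \<le> \<theta>" "\<theta> \<le> 0" for \<theta> using that tau by auto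
  from assms consider "L 0 \<noteq> 0" | "N 0 \<noteq> 0" | \<theta> where "-ptau2 p \<le> \<theta>" "\<theta> \<le> 0" "Aq \<theta> \<noteq> 0"
    | \<theta> where "-ptau1 p \<le> \<theta>" "\<theta> \<le> 0" "Af \<theta> \<noteq> 0"
    unfolding effective_nonzero_init_def by auto
  then show "0 < L t \<and> 0 < N t \<and> 0 < Aq t \<and> 0 < Af t"
  proof cases
    case 1
    then have "0 < L 0" using nonneg0[of 0] by auto
    have Lp: "0 < L s" if "0 \<le> s" for s
    proof (rule pos_keep[where f="\<lambda>s. c1 * Af (s - ptau1 p)" and k=k1 and x=L and a=0])
      fix s :: real assume "0 \<le> s"
      then show "(L has_real_derivative (c1 * Af (s - ptau1 p) - k1 * L s)) (at s within {0..})" by (rule dL)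
      have "- ptau p \<le> s - ptau1 p" using \<open>0\<le>s\<close> tau by simp
      then show "0 \<le> c1 * Af (s - ptau1 p)" using nonneg kpos by simp
    qed (use \<open>0 < L 0\<close> that in auto)
    have Np: "0 < N s" if "0 < s" for s by (rule pN[of 0]) (use Lp that in auto)
    have Aqp: "0 < Aq s" if "0 < s" for s by (rule pAq[of 0]) (use Np that in auto)
    have Afp: "0 < Af s" if "ptau2 p < s" for s by (rule pAf[of 0 1]) (use Aqp that t1 in auto)
    show ?thesis using Lp Np Aqp Afp t t1 by auto
  next
    case 2
    then have "0 < N 0" using nonneg0[of 0] by auto
    have Np: "0 < N s" if "0 \<le> s" for s
    proof (rule pos_keep[where f="\<lambda>s. pr1 p * g (L s)" and k=k2 and x=N and a=0])
      fix s :: real assume "0 \<le> s"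
      then show "(N has_real_derivative (pr1 p * g (L s) - k2 * N s)) (at s within {0..})" by (rule dN)
      show "0 \<le> pr1 p * g (L s)" using nonneg0[OF \<open>0\<le>s\<close>] pos g_nonneg by simp
    qed (use \<open>0 < N 0\<close> that in auto)
    have Aqp: "0 < Aq s" if "0 < s" for s by (rule pAq[of 0]) (use Np that in auto)
    have Afp: "0 < Af s" if "ptau2 p < s" for s by (rule pAf[of 0 1]) (use Aqp that t1 in auto)
    have Lp: "0 < L s" if "ptau2 p + ptau1 p < s" for s
      by (rule pL[of "ptau2 p" "ptau2 p + 1"]) (use Afp that t1 in auto)
    show ?thesis using Lp Np Aqp Afp t t1 by auto
  next
    case (3 \<theta>)
    then have "0 < Aq \<theta>" using nonneg[of \<theta>] inw[of \<theta>] by auto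
    from cont_pos[OF cont(3) _ this] obtain d where d: "d > 0" "\<forall>s\<in>{-ptau p..}. \<bar>s - \<theta>\<bar> < d \<longrightarrow> 0 < Aq s"
      using inw[of \<theta>] 3 by auto
    have Afp: "0 < Af s" if "\<theta> + ptau2 p < s" for s
    proof (rule pAf[of \<theta> "\<theta> + d"])
      fix s assume "\<theta> < s" "s < \<theta> + d"
      then show "0 < Aq s" using d inw[of \<theta>] 3 by auto
    qed (use 3 d that in auto)
    have Lp: "0 < L s" if "\<theta> + ptau2 p + ptau1 p < s" for s
      by (rule pL[of "\<theta> + ptau2 p" "\<theta> + ptau2 p + 1"]) (use Afp that t1 3 in auto)
    have Np: "0 < N s" if "\<theta> + ptau2 p + ptau1 p < s" for s
      by (rule pN[of "\<theta> + ptau2 p + ptau1 p"]) (use Lp that t1 3 in auto)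
    have Aqp: "0 < Aq s" if "\<theta> + ptau2 p + ptau1 p < s" for s
      by (rule pAq[of "\<theta> + ptau2 p + ptau1 p"]) (use Np that t1 3 in auto)
    show ?thesis using Lp Np Aqp Afp t t1 3 by auto
  next
    case (4 \<theta>)
    then have "0 < Af \<theta>" using nonneg[of \<theta>] inw'[of \<theta>] by auto
    from cont_pos[OF cont(4) _ this] obtain d where d: "d > 0" "\<forall>s\<in>{-ptau p..}. \<bar>s - \<theta>\<bar> < d \<longrightarrow> 0 < Af s"
      using inw'[of \<theta>] 4 by auto
    have Lp: "0 < L s" if "\<theta> + ptau1 p < s" for s
    proof (rule pL[of \<theta> "\<theta> + d"])
      fix s assume "\<theta> < s" "s < \<theta> + d"
      then show "0 < Af s" using d inw'[of \<theta>] 4 by auto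
    qed (use 4 d that in auto)
    have Np: "0 < N s" if "\<theta> + ptau1 p < s" for s
      by (rule pN[of "\<theta> + ptau1 p"]) (use Lp that t1 4 in auto)
    have Aqp: "0 < Aq s" if "\<theta> + ptau1 p < s" for s
      by (rule pAq[of "\<theta> + ptau1 p"]) (use Np that t1 4 in auto)
    have Afp: "0 < Af s" if "\<theta> + ptau1 p + ptau2 p < s" for s
      by (rule pAf[of "\<theta> + ptau1 p" "\<theta> + ptau1 p + 1"]) (use Aqp that t1 4 in auto)
    show ?thesis using Lp Np Aqp Afp t t1 4 by auto
  qed
qed

end


context sys
begin

lemma subsol:
  assumes "R0 p > 1" "0 \<le> s" "s \<le> 1"
  shows "k1*(s*Ls) \<le> c1*(s*Afs)" "k2*(s*Ns) \<le> pr1 p * g (s*Ls)"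
    "k3*(s*Aqs) \<le> pr2 p*(s*Ns)" "k4*(s*Afs) \<le> c4*(s*Aqs)"
proof -
  note E = eq_props[OF assms(1)]
  have "k1*(s*Ls) = s*(k1*Ls)" "c1*(s*Afs) = s*(c1*Afs)" by (simp_all add: ac_simps)
  show "k1*(s*Ls) \<le> c1*(s*Afs)" using E(5) by (metis mult.left_commute order_refl)
  have "k3*(s*Aqs) = s*(k3*Aqs)" "pr2 p*(s*Ns) = s*(pr2 p*Ns)" by (simp_all add: ac_simps)
  show "k3*(s*Aqs) \<le> pr2 p*(s*Ns)" using E(7) by (metis mult.left_commute order_refl)
  have "k4*(s*Afs) = s*(k4*Afs)" "c4*(s*Aqs) = s*(c4*Aqs)" by (simp_all add: ac_simps)
  show "k4*(s*Afs) \<le> c4*(s*Aqs)" using E(8) by (metis mult.left_commute order_refl)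
  have "k2*(s*Ns) = pr1 p * (s * g Ls)" using E by (simp add: ac_simps)
  also have "\<dots> \<le> pr1 p * g (s*Ls)" using g_conc_lo[of Ls s] assms E pos by (intro mult_left_mono) auto
  finally show "k2*(s*Ns) \<le> pr1 p * g (s*Ls)" .
qed

lemma supsol:
  assumes "R0 p > 1" "1 \<le> s"
  shows "c1*(s*Afs) \<le> k1*(s*Ls)" "pr1 p * g (s*Ls) \<le> k2*(s*Ns)"
    "pr2 p*(s*Ns) \<le> k3*(s*Aqs)" "c4*(s*Aqs) \<le> k4*(s*Afs)"
proof -
  note E = eq_props[OF assms(1)]
  have "k1*(s*Ls) = s*(k1*Ls)" "c1*(s*Afs) = s*(c1*Afs)" by (simp_all add: ac_simps)
  show "c1*(s*Afs) \<le> k1*(s*Ls)" using E(5) by (metis mult.left_commute order_refl)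
  have "k3*(s*Aqs) = s*(k3*Aqs)" "pr2 p*(s*Ns) = s*(pr2 p*Ns)" by (simp_all add: ac_simps)
  show "pr2 p*(s*Ns) \<le> k3*(s*Aqs)" using E(7) by (metis mult.left_commute order_refl)
  have "k4*(s*Afs) = s*(k4*Afs)" "c4*(s*Aqs) = s*(c4*Aqs)" by (simp_all add: ac_simps)
  show "c4*(s*Aqs) \<le> k4*(s*Afs)" using E(8) by (metis mult.left_commute order_refl)
  have "pr1 p * g (s*Ls) \<le> pr1 p * (s * g Ls)" using g_conc_hi[of Ls s] assms E pos by (intro mult_left_mono) auto
  also have "\<dots> = k2*(s*Ns)" using E by (simp add: ac_simps)
  finally show "pr1 p * g (s*Ls) \<le> k2*(s*Ns)" .
qed

end

context sol
begin

lemma persist: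
  assumes "R0 p > 1" "effective_nonzero_init p L N Aq Af"
  shows "0 < lb L"
proof -
  note E = eq_props[OF assms(1)]
  define T where "T = ptau1 p + ptau2 p + 1"
  have T0: "0 \<le> T" using pos by (simp add: T_def)
  have P: "\<And>t. T \<le> t \<Longrightarrow> 0 < L t \<and> 0 < N t \<and> 0 < Aq t \<and> 0 < Af t"
    using pos_after[OF assms(2)] by (simp add: T_def)
  define W where "W = {T..T + ptau p}"
  have Wsub: "W \<subseteq> {-ptau p..}" using T0 tau by (auto simp: W_def)
  have Wne: "W \<noteq> {}" "compact W" using tau by (auto simp: W_def)
  have inW: "T \<le> t" if "t \<in> W" for t using that by (simp add: W_def)
  obtain tL where tL: "tL \<in> W" "\<forall>y\<in>W. L tL \<le> L y"
    using continuous_attains_inf[OF Wne(2) Wne(1) continuous_on_subset[OF cont(1) Wsub]] by blast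
  obtain tN where tN: "tN \<in> W" "\<forall>y\<in>W. N tN \<le> N y"
    using continuous_attains_inf[OF Wne(2) Wne(1) continuous_on_subset[OF cont(2) Wsub]] by blast
  obtain tAq where tAq: "tAq \<in> W" "\<forall>y\<in>W. Aq tAq \<le> Aq y"
    using continuous_attains_inf[OF Wne(2) Wne(1) continuous_on_subset[OF cont(3) Wsub]] by blast
  obtain tAf where tAf: "tAf \<in> W" "\<forall>y\<in>W. Af tAf \<le> Af y"
    using continuous_attains_inf[OF Wne(2) Wne(1) continuous_on_subset[OF cont(4) Wsub]] by blast
  have mp: "0 < L tL" "0 < N tN" "0 < Aq tAq" "0 < Af tAf"
    using P inW tL(1) tN(1) tAq(1) tAf(1) by blast+
  define s where "s = min 1 (min (min (L tL / Ls) (N tN / Ns)) (min (Aq tAq / Aqs) (Af tAf / Afs)))"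
  have s0: "0 < s" "s \<le> 1" using mp E by (auto simp: s_def)
  have sL: "s * Ls \<le> L tL" using E(1) by (simp add: s_def pos_le_divide_eq[symmetric] min_le_iff_disj)
  have sN: "s * Ns \<le> N tN" using E(2) by (simp add: s_def pos_le_divide_eq[symmetric] min_le_iff_disj)
  have sAq: "s * Aqs \<le> Aq tAq" using E(3) by (simp add: s_def pos_le_divide_eq[symmetric] min_le_iff_disj)
  have sAf: "s * Afs \<le> Af tAf" using E(4) by (simp add: s_def pos_le_divide_eq[symmetric] min_le_iff_disj)
  have low: "s*Ls \<le> L t" if "T \<le> t" for t
  proof -
    have "s*Ls \<le> L t \<and> s*Ns \<le> N t \<and> s*Aqs \<le> Aq t \<and> s*Afs \<le> Af t"
    proof (rule box_lower[where Ts="T + ptau p"])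
      fix t assume "T + ptau p - ptau p \<le> t" "t \<le> T + ptau p"
      then have "t \<in> W" by (simp add: W_def)
      then show "s*Ls \<le> L t \<and> s*Ns \<le> N t \<and> s*Aqs \<le> Aq t \<and> s*Afs \<le> Af t"
        using sL sN sAq sAf tL tN tAq tAf by fastforce
    qed (use subsol[OF assms(1)] s0 E T0 tau that in auto)
    then show ?thesis by simp
  qed
  have "s * Ls \<le> lb L"
  proof (rule lb_ge[OF ev_bnd(1)])
    fix e :: real assume "e > 0"
    show "eventually (\<lambda>t. s * Ls - e \<le> L t) at_top"
      using eventually_ge_at_top[of T] by (rule eventually_mono) (use low \<open>e>0\<close> in force)
  qed
  moreover have "0 < s * Ls" using s0 E by simp
  ultimately show ?thesis by simp
qed

end


lemma band:
  fixes x c s m :: real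
  assumes "\<bar>x - c\<bar> < s*m" "m \<le> c" "0 \<le> s"
  shows "(1-s)*c \<le> x \<and> x \<le> (1+s)*c"
proof -
  have "s*m \<le> s*c" using assms by (intro mult_left_mono) auto
  then show ?thesis using assms by (auto simp: algebra_simps abs_if split: if_splits)
qed

lemma band2:
  fixes x c s M \<epsilon> :: real
  assumes "(1-s)*c \<le> x" "x \<le> (1+s)*c" "c \<le> M" "0 \<le> s" "s*M \<le> \<epsilon>/2" "0 < \<epsilon>"
  shows "\<bar>x - c\<bar> < \<epsilon>"
proof -
  have "s*c \<le> s*M" using assms by (intro mult_left_mono) auto
  then show ?thesis using assms by (auto simp: algebra_simps abs_if)
qed

context sys
begin

lemma stable_star:
  assumes R: "R0 p > 1"
  shows "stable_in p (Ls, Ns, Aqs, Afs) P"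
  unfolding stable_in_def prod.case
proof (intro allI impI)
  fix \<epsilon> :: real assume "\<epsilon> > 0"
  note E = eq_props[OF R]
  define umax where "umax = max (max Ls Ns) (max Aqs Afs)"
  define umin where "umin = min (min Ls Ns) (min Aqs Afs)"
  have umax: "0 < umax" "Ls \<le> umax" "Ns \<le> umax" "Aqs \<le> umax" "Afs \<le> umax" using E by (auto simp: umax_def)
  have umin: "0 < umin" "umin \<le> Ls" "umin \<le> Ns" "umin \<le> Aqs" "umin \<le> Afs" using E by (auto simp: umin_def)
  define s where "s = min (1/2) (\<epsilon>/(2*umax))"
  have s: "0 < s" "s \<le> 1/2" using \<open>\<epsilon>>0\<close> umax by (auto simp: s_def)
  have "s * umax \<le> (\<epsilon>/(2*umax)) * umax" using umax by (intro mult_right_mono) (auto simp: s_def)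
  then have s2: "s * umax \<le> \<epsilon>/2" using umax by simp
  have dpos: "0 < s*umin" using s umin by simp
  show "\<exists>\<delta>>0. \<forall>L N Aq Af. is_solution p L N Aq Af \<and> nonneg_init p L N Aq Af \<and> P L N Aq Af \<and>
        (\<forall>\<theta>\<in>{- ptau p..0}. \<bar>L \<theta> - Ls\<bar> < \<delta> \<and> \<bar>N \<theta> - Ns\<bar> < \<delta> \<and> \<bar>Aq \<theta> - Aqs\<bar> < \<delta> \<and> \<bar>Af \<theta> - Afs\<bar> < \<delta>) \<longrightarrow>
        (\<forall>t\<ge>- ptau p. \<bar>L t - Ls\<bar> < \<epsilon> \<and> \<bar>N t - Ns\<bar> < \<epsilon> \<and> \<bar>Aq t - Aqs\<bar> < \<epsilon> \<and> \<bar>Af t - Afs\<bar> < \<epsilon>)"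
  proof (rule exI[of _ "s*umin"], rule conjI[OF dpos], intro allI impI)
    fix L N Aq Af t
    assume H: "is_solution p L N Aq Af \<and> nonneg_init p L N Aq Af \<and> P L N Aq Af \<and>
        (\<forall>\<theta>\<in>{- ptau p..0}. \<bar>L \<theta> - Ls\<bar> < s*umin \<and> \<bar>N \<theta> - Ns\<bar> < s*umin \<and> \<bar>Aq \<theta> - Aqs\<bar> < s*umin \<and> \<bar>Af \<theta> - Afs\<bar> < s*umin)"
      and t: "- ptau p \<le> t"
    have "sol p L N Aq Af" using H adm by (auto simp: sol_def sol_axioms_def sys_def)
    then interpret S: sol p L N Aq Af .
    have win: "((1-s)*Ls \<le> L \<theta> \<and> L \<theta> \<le> (1+s)*Ls) \<and> ((1-s)*Ns \<le> N \<theta> \<and> N \<theta> \<le> (1+s)*Ns) \<and>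
               ((1-s)*Aqs \<le> Aq \<theta> \<and> Aq \<theta> \<le> (1+s)*Aqs) \<and> ((1-s)*Afs \<le> Af \<theta> \<and> Af \<theta> \<le> (1+s)*Afs)"
      if "- ptau p \<le> \<theta>" "\<theta> \<le> 0" for \<theta>
    proof -
      have "\<bar>L \<theta> - Ls\<bar> < s*umin \<and> \<bar>N \<theta> - Ns\<bar> < s*umin \<and> \<bar>Aq \<theta> - Aqs\<bar> < s*umin \<and> \<bar>Af \<theta> - Afs\<bar> < s*umin"
        using H that by auto
      then show ?thesis using band[of _ _ s umin] umin s by auto
    qed
    have lo: "(1-s)*Ls \<le> L t \<and> (1-s)*Ns \<le> N t \<and> (1-s)*Aqs \<le> Aq t \<and> (1-s)*Afs \<le> Af t"
      by (rule S.box_lower[where Ts=0]) (use subsol[OF R, of "1-s"] s E win t in auto)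
    have hi: "L t \<le> (1+s)*Ls \<and> N t \<le> (1+s)*Ns \<and> Aq t \<le> (1+s)*Aqs \<and> Af t \<le> (1+s)*Afs"
      by (rule S.box_upper[where Ts=0]) (use supsol[OF R, of "1+s"] s E win t in auto)
    show "\<bar>L t - Ls\<bar> < \<epsilon> \<and> \<bar>N t - Ns\<bar> < \<epsilon> \<and> \<bar>Aq t - Aqs\<bar> < \<epsilon> \<and> \<bar>Af t - Afs\<bar> < \<epsilon>"
      using lo hi band2[of s _ _ umax \<epsilon>] umax s s2 \<open>\<epsilon>>0\<close> by auto
  qed
qed

lemma stable0:
  assumes R: "R0 p \<le> 1"
  shows "stable_in p (0, 0, 0, 0) P"
  unfolding stable_in_def prod.case
proof (intro allI impI)
  fix \<epsilon> :: real assume "\<epsilon> > 0"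
  define v2 where "v2 = pr1 p * (pNcap p / ph p) / k2"
  define v3 where "v3 = pr2 p * v2 / k3"
  define v4 where "v4 = c4 * v3 / k4"
  have vpos: "0 < v2" "0 < v3" "0 < v4" using pos kpos by (auto simp: v2_def v3_def v4_def)
  have "c1 * v4 / k1 = Kc * (pNcap p / ph p)" unfolding v4_def v3_def v2_def by (rule chain_eq)
  also have "\<dots> = R0 p" by (simp add: R0_eq)
  finally have "c1 * v4 / k1 \<le> 1" using R by simp
  then have cv: "c1 * v4 \<le> k1" using kpos by (simp add: divide_le_eq)
  define vmax where "vmax = max (max 1 v2) (max v3 v4)"
  define vmin where "vmin = min (min 1 v2) (min v3 v4)"
  have vmax: "0 < vmax" "1 \<le> vmax" "v2 \<le> vmax" "v3 \<le> vmax" "v4 \<le> vmax" by (auto simp: vmax_def)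
  have vmin: "0 < vmin" "vmin \<le> 1" "vmin \<le> v2" "vmin \<le> v3" "vmin \<le> v4" using vpos by (auto simp: vmin_def)
  define \<sigma> where "\<sigma> = \<epsilon> / (2 * vmax)"
  have \<sigma>: "0 < \<sigma>" "\<sigma> * vmax = \<epsilon>/2" using \<open>\<epsilon>>0\<close> vmax by (auto simp: \<sigma>_def)
  have sv: "\<sigma> * vmin \<le> \<sigma> * v" if "vmin \<le> v" for v using that \<sigma> by (intro mult_left_mono) auto
  have sV: "\<sigma> * v \<le> \<epsilon>/2" if "v \<le> vmax" for v using mult_left_mono[OF that, of \<sigma>] \<sigma> by linarith
  have dpos: "0 < \<sigma>* vmin" using \<sigma> vmin by simp
  show "\<exists>\<delta>>0. \<forall>L N Aq Af. is_solution p L N Aq Af \<and> nonneg_init p L N Aq Af \<and> P L N Aq Af \<and>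
        (\<forall>\<theta>\<in>{- ptau p..0}. \<bar>L \<theta> - 0\<bar> < \<delta> \<and> \<bar>N \<theta> - 0\<bar> < \<delta> \<and> \<bar>Aq \<theta> - 0\<bar> < \<delta> \<and> \<bar>Af \<theta> - 0\<bar> < \<delta>) \<longrightarrow>
        (\<forall>t\<ge>- ptau p. \<bar>L t - 0\<bar> < \<epsilon> \<and> \<bar>N t - 0\<bar> < \<epsilon> \<and> \<bar>Aq t - 0\<bar> < \<epsilon> \<and> \<bar>Af t - 0\<bar> < \<epsilon>)"
  proof (rule exI[of _ "\<sigma>* vmin"], rule conjI[OF dpos], intro allI impI)
    fix L N Aq Af t
    assume H: "is_solution p L N Aq Af \<and> nonneg_init p L N Aq Af \<and> P L N Aq Af \<and>
        (\<forall>\<theta>\<in>{- ptau p..0}. \<bar>L \<theta> - 0\<bar> < \<sigma>* vmin \<and> \<bar>N \<theta> - 0\<bar> < \<sigma>* vmin \<and> \<bar>Aq \<theta> - 0\<bar> < \<sigma>* vmin \<and> \<bar>Af \<theta> - 0\<bar> < \<sigma>* vmin)"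
      and t: "- ptau p \<le> t"
    have "sol p L N Aq Af" using H adm by (auto simp: sol_def sol_axioms_def sys_def)
    then interpret S: sol p L N Aq Af .
    have win: "L \<theta> \<le> \<sigma>*1 \<and> N \<theta> \<le> \<sigma>* v2 \<and> Aq \<theta> \<le> \<sigma>* v3 \<and> Af \<theta> \<le> \<sigma>* v4"
      if "0 - ptau p \<le> \<theta>" "\<theta> \<le> 0" for \<theta>
    proof -
      have "\<bar>L \<theta> - 0\<bar> < \<sigma>* vmin \<and> \<bar>N \<theta> - 0\<bar> < \<sigma>* vmin \<and> \<bar>Aq \<theta> - 0\<bar> < \<sigma>* vmin \<and> \<bar>Af \<theta> - 0\<bar> < \<sigma>* vmin"
        using H that by auto
      then show ?thesis using sv[OF vmin(2)] sv[OF vmin(3)] sv[OF vmin(4)] sv[OF vmin(5)] by auto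
    qed
    have s1: "c1 * (\<sigma>* v4) \<le> k1 * (\<sigma>*1)"
      using mult_left_mono[OF cv, of \<sigma>] \<sigma> by (simp add: ac_simps)
    have "g (\<sigma>*1) \<le> pNcap p / ph p * \<sigma>" using g_lin[of \<sigma>] \<sigma> by simp
    then have "pr1 p * g (\<sigma>*1) \<le> pr1 p * (pNcap p / ph p * \<sigma>)" using pos by (intro mult_left_mono) auto
    also have "\<dots> = k2 * (\<sigma>* v2)" using kpos by (simp add: v2_def)
    finally have s2: "pr1 p * g (\<sigma>*1) \<le> k2 * (\<sigma>* v2)" .
    have s3: "pr2 p * (\<sigma>* v2) \<le> k3 * (\<sigma>* v3)" using kpos by (simp add: v3_def)
    have s4: "c4 * (\<sigma>* v3) \<le> k4 * (\<sigma>* v4)" using kpos by (simp add: v4_def)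
    have hi: "L t \<le> \<sigma>*1 \<and> N t \<le> \<sigma>* v2 \<and> Aq t \<le> \<sigma>* v3 \<and> Af t \<le> \<sigma>* v4"
      by (rule S.box_upper[where Ts=0, OF _ s1 s2 s3 s4]) (use win t in auto)
    have nn: "0 \<le> L t \<and> 0 \<le> N t \<and> 0 \<le> Aq t \<and> 0 \<le> Af t" using S.nonneg t by simp
    show "\<bar>L t - 0\<bar> < \<epsilon> \<and> \<bar>N t - 0\<bar> < \<epsilon> \<and> \<bar>Aq t - 0\<bar> < \<epsilon> \<and> \<bar>Af t - 0\<bar> < \<epsilon>"
      using hi nn sV[OF vmax(2)] sV[OF vmax(3)] sV[OF vmax(4)] sV[OF vmax(5)] \<open>\<epsilon>>0\<close> by auto
  qed
qed

end


context sys
begin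

lemma equil_iff:
  "is_equilibrium p (x1, x2, x3, x4) \<longleftrightarrow>
     c1 * x4 - k1 * x1 = 0 \<and> pr1 p * g x1 - k2 * x2 = 0 \<and> pr2 p * x2 - k3 * x3 = 0 \<and> c4 * x3 - k4 * x4 = 0"
  unfolding is_equilibrium_def prod.case c1_def c4_def k1_def k2_def k3_def k4_def by simp

lemma equil_unique:
  assumes "is_equilibrium p (x1, x2, x3, x4)" "0 < x1"
  shows "x1 = Ls \<and> x2 = Ns \<and> x3 = Aqs \<and> x4 = Afs"
proof -
  have e: "k1 * x1 = c1 * x4" "k2 * x2 = pr1 p * g x1" "k3 * x3 = pr2 p * x2" "k4 * x4 = c4 * x3"
    using assms(1) unfolding equil_iff by auto
  have x2: "x2 = pr1 p * g x1 / k2" using e(2) kpos by (simp add: field_simps)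
  have x3: "x3 = pr2 p * x2 / k3" using e(3) kpos by (simp add: field_simps)
  have x4: "x4 = c4 * x3 / k4" using e(4) kpos by (simp add: field_simps)
  have x1: "x1 = c1 * x4 / k1" using e(1) kpos by (simp add: field_simps)
  have "x1 = Kc * g x1" using x1 x2 x3 x4 chain_eq[of "g x1"] by simp
  then have "ph p + x1 = Kc * pNcap p" using fp_upper[OF assms(2)] fp_lower[OF assms(2)] by force
  then have "x1 = Ls" by (simp add: Ls_def)
  then show ?thesis using x2 x3 x4 by (simp add: Ns_def Aqs_def Afs_def)
qed

end

theorem theorem4p1:
  fixes p :: par
  assumes "admissible p"
  shows "(R0 p \<le> 1 \<longrightarrow>
            stable_in p (0, 0, 0, 0) (\<lambda>L N Aq Af. True) \<and>
            attractive_in p (0, 0, 0, 0) (\<lambda>L N Aq Af. True))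
       \<and> (R0 p > 1 \<longrightarrow>
            (\<exists>e. is_equilibrium p e \<and> fst e > 0 \<and> fst (snd e) > 0 \<and>
                 fst (snd (snd e)) > 0 \<and> snd (snd (snd e)) > 0 \<and>
                 (\<forall>e'. is_equilibrium p e' \<and> fst e' > 0 \<and> fst (snd e') > 0 \<and>
                       fst (snd (snd e')) > 0 \<and> snd (snd (snd e')) > 0 \<longrightarrow> e' = e) \<and>
                 stable_in p e (nonzero_init p) \<and>
                 attractive_in p e (effective_nonzero_init p)))"
proof -
  interpret sys p by unfold_locales (rule assms)
  have mk: "sol p L N Aq Af" if "is_solution p L N Aq Af" "nonneg_init p L N Aq Af" for L N Aq Af
    using that assms by (auto simp: sol_def sol_axioms_def sys_def)
  show ?thesis
  proof (intro conjI impI)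
    assume R: "R0 p \<le> 1"
    show "stable_in p (0, 0, 0, 0) (\<lambda>L N Aq Af. True)" by (rule stable0[OF R])
    show "attractive_in p (0, 0, 0, 0) (\<lambda>L N Aq Af. True)"
      unfolding attractive_in_def prod.case
    proof (intro allI impI)
      fix L N Aq Af assume H: "is_solution p L N Aq Af \<and> nonneg_init p L N Aq Af \<and> True"
      then interpret S: sol p L N Aq Af using mk by blast
      show "(L \<longlongrightarrow> 0) at_top \<and> (N \<longlongrightarrow> 0) at_top \<and> (Aq \<longlongrightarrow> 0) at_top \<and> (Af \<longlongrightarrow> 0) at_top"
        by (rule S.attract0[OF R])
    qed
  next
    assume R: "R0 p > 1"
    note E = eq_props[OF R]
    have eq: "is_equilibrium p (Ls, Ns, Aqs, Afs)" unfolding equil_iff using E by simp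
    have uniq: "e' = (Ls, Ns, Aqs, Afs)" if "is_equilibrium p e' \<and> fst e' > 0 \<and> fst (snd e') > 0 \<and>
                       fst (snd (snd e')) > 0 \<and> snd (snd (snd e')) > 0" for e'
    proof -
      obtain x1 x2 x3 x4 where e': "e' = (x1, x2, x3, x4)" by (cases e') auto
      show ?thesis using equil_unique[of x1 x2 x3 x4] that unfolding e' by auto
    qed
    have att: "attractive_in p (Ls, Ns, Aqs, Afs) (effective_nonzero_init p)"
      unfolding attractive_in_def prod.case
    proof (intro allI impI)
      fix L N Aq Af assume H: "is_solution p L N Aq Af \<and> nonneg_init p L N Aq Af \<and> effective_nonzero_init p L N Aq Af"
      then interpret S: sol p L N Aq Af using mk by blast
      show "(L \<longlongrightarrow> Ls) at_top \<and> (N \<longlongrightarrow> Ns) at_top \<and> (Aq \<longlongrightarrow> Aqs) at_top \<and> (Af \<longlongrightarrow> Afs) at_top"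
        by (rule S.attract_star[OF R S.persist[OF R]]) (use H in auto)
    qed
    show "\<exists>e. is_equilibrium p e \<and> fst e > 0 \<and> fst (snd e) > 0 \<and>
                 fst (snd (snd e)) > 0 \<and> snd (snd (snd e)) > 0 \<and>
                 (\<forall>e'. is_equilibrium p e' \<and> fst e' > 0 \<and> fst (snd e') > 0 \<and>
                       fst (snd (snd e')) > 0 \<and> snd (snd (snd e')) > 0 \<longrightarrow> e' = e) \<and>
                 stable_in p e (nonzero_init p) \<and>
                 attractive_in p e (effective_nonzero_init p)"
      using eq E uniq stable_star[OF R] att by (intro exI[of _ "(Ls, Ns, Aqs, Afs)"]) auto
  qed
qed


end
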